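(* Let $m\geq 3$ be an integer and let $P$ be the uniform distribution (normalized one-dimensional length measure) on the boundary of a regular $m$-sided polygon $A_1A_2\cdots A_m$ inscribed in the unit circle $x_1^2+x_2^2=1$ in $\mathbb{R}^2$. Let $\beta=\{A_1,\dots,A_m\}$ be the set of vertices of the polygon, and for $n\geq m$ let $V_n$ denote the $n$th conditional quantization error of $P$ with respect to $\beta$, and $V_\infty=\lim_{n\to\infty}V_n$. Then the conditional quantization coefficient of $P$ exists as a finite positive number and \[\lim_{n\to\infty} n^2\,(V_n-V_\infty)=\frac13\, m^2\sin^2\frac{\pi}{m}.\]
   Context: Conditional quantization: for a Borel probability measure $P$ on $\mathbb{R}^2$ (Euclidean norm $\|\cdot\|$) and a finite set $\beta\subset\mathbb{R}^2$ with $\mathrm{card}(\beta)=\ell$, for $n\geq \ell$ the $n$th conditional quantization error with respect to $\beta$ is $V_n=\inf\{\int \min_{a\in\alpha\cup\beta}\|x-a\|^2\,dP(x):\alpha\subset\mathbb{R}^2,\ \mathrm{card}(\alpha)\leq n-\ell\}$. The vertices may be taken as $A_j=(\cos\theta_j,\sin\theta_j)$ with $\theta_j=\frac{3\pi}{2}-\frac{\pi}{m}+(j-1)\frac{2\pi}{m}$, $1\le j\le m$. *)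

theory Defs
  imports "HOL-Analysis.Analysis"
begin

text \<open>Vertex \<open>A_j\<close> of the regular m-gon inscribed in the unit circle
  (paper indexing j = 1..m; note \<open>poly_vertex m (m+1) = poly_vertex m 1\<close>).\<close>
definition poly_vertex :: "nat \<Rightarrow> nat \<Rightarrow> real^2" where
  "poly_vertex m j =
     (let \<theta> = 3 * pi / 2 - pi / real m + (real j - 1) * (2 * pi / real m)
      in vector [cos \<theta>, sin \<theta>])"

definition poly_vertices :: "nat \<Rightarrow> (real^2) set" where
  "poly_vertices m = poly_vertex m ` {1..m}"

text \<open>Constant-speed (arc-length proportional) parametrization of the boundary
  of the polygon by \<open>t \<in> [0, m]\<close>: on \<open>[j-1, j]\<close> it traverses the side \<open>A_j A_{j+1}\<close>.\<close>
definition poly_curve :: "nat \<Rightarrow> real \<Rightarrow> real^2" where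
  "poly_curve m t =
     (let j = nat \<lfloor>t\<rfloor>; s = t - of_int \<lfloor>t\<rfloor>
      in (1 - s) *\<^sub>R poly_vertex m (j + 1) + s *\<^sub>R poly_vertex m (j + 2))"

definition poly_measure :: "nat \<Rightarrow> (real^2) measure" where
  "poly_measure m = distr (uniform_measure lborel {0..real m}) borel (poly_curve m)"

definition cond_quant_error :: "(real^2) measure \<Rightarrow> (real^2) set \<Rightarrow> nat \<Rightarrow> real" where
  "cond_quant_error M \<beta> n =
     Inf { (\<integral>x. Min ((\<lambda>a. (norm (x - a))\<^sup>2) ` (\<alpha> \<union> \<beta>)) \<partial>M) | \<alpha>.
            finite \<alpha> \<and> card \<alpha> \<le> n - card \<beta> }"

end

theory Submission
  imports Defs "HOL-Real_Asymp.Real_Asymp"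
begin

definition sl :: "nat \<Rightarrow> real" where "sl m = 2 * sin (pi / real m)"

definition seg :: "nat \<Rightarrow> nat \<Rightarrow> real \<Rightarrow> real^2" where
  "seg m j s = (1 - s) *\<^sub>R poly_vertex m (j+1) + s *\<^sub>R poly_vertex m (j+2)"

definition th :: "nat \<Rightarrow> nat \<Rightarrow> real" where
  "th m i = 3 * pi / 2 - pi / real m + (real i - 1) * (2 * pi / real m)"

lemma pv_th: "poly_vertex m i = vector [cos (th m i), sin (th m i)]"
  unfolding poly_vertex_def th_def Let_def by simp

lemma vinner: "poly_vertex m i \<bullet> poly_vertex m k = cos ((real i - real k) * (2*pi/real m))"
proof -
  have "poly_vertex m i \<bullet> poly_vertex m k = cos (th m i) * cos (th m k) + sin (th m i) * sin (th m k)"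
    unfolding pv_th inner_vec_def UNIV_2 by simp
  also have "\<dots> = cos (th m i - th m k)"
    by (simp add: cos_diff)
  also have "th m i - th m k = (real i - real k) * (2*pi/real m)"
    by (cases "m = 0") (simp_all add: th_def field_simps)
  finally show ?thesis .
qed

lemma vnorm: "norm (poly_vertex m i) = 1"
proof -
  have "norm (poly_vertex m i) ^ 2 = 1" by (simp add: power2_norm_eq_inner vinner)
  then show ?thesis using norm_ge_zero[of "poly_vertex m i"] by (simp add: power2_eq_1_iff)
qed

lemma vperiod: assumes "m > 0" shows "poly_vertex m (j + m) = poly_vertex m j"
proof -
  have "th m (j+m) = th m j + 2 * pi"
    using assms unfolding th_def by (simp add: field_simps)
  then show ?thesis unfolding pv_th by simp
qed

lemma sl_pos: assumes "m \<ge> 2" shows "sl m > 0"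
proof -
  have "0 < pi / real m" using assms by simp
  moreover have "pi / real m < pi" using assms by (simp add: field_simps)
  ultimately show ?thesis unfolding sl_def by (simp add: sin_gt_zero)
qed

lemma vdist2: assumes "m > 0" shows "(norm (poly_vertex m (j+2) - poly_vertex m (j+1)))^2 = (sl m)^2"
proof -
  have "(norm (poly_vertex m (j+2) - poly_vertex m (j+1)))^2
      = poly_vertex m (j+2) \<bullet> poly_vertex m (j+2) + poly_vertex m (j+1) \<bullet> poly_vertex m (j+1) - 2 * (poly_vertex m (j+2) \<bullet> poly_vertex m (j+1))"
    by (simp add: power2_norm_eq_inner algebra_simps inner_commute)
  also have "\<dots> = 2 - 2 * cos (2 * (pi / real m))" by (simp add: vinner)
  also have "\<dots> = (sl m)^2" unfolding sl_def cos_double_sin by (simp add: power2_eq_square)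
  finally show ?thesis .
qed

lemma seg_diff: "seg m j s - seg m j s' = (s - s') *\<^sub>R (poly_vertex m (j+2) - poly_vertex m (j+1))"
  unfolding seg_def by (simp add: algebra_simps)

lemma seg_dist: assumes "m > 0" "m \<ge> 2" shows "norm (seg m j s - seg m j s') = \<bar>s - s'\<bar> * sl m"
proof -
  have "norm (poly_vertex m (j+2) - poly_vertex m (j+1)) = sl m"
    using vdist2[OF assms(1), of j] sl_pos[OF assms(2)]
    by (metis norm_ge_zero power2_eq_imp_eq less_imp_le)
  then show ?thesis by (simp add: seg_diff)
qed

lemma cos_odd_bound:
  fixes k :: int assumes m3: "m \<ge> 3"
  shows "cos ((2 * real_of_int k - 1) * pi / real m) \<le> cos (pi / real m)"
    and "k mod int m \<notin> {0, 1} \<Longrightarrow> cos ((2 * real_of_int k - 1) * pi / real m) \<le> cos (3 * pi / real m)"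
proof -
  define r where "r = k mod int m"
  define q where "q = k div int m"
  have mpos: "real m > 0" using m3 by simp
  have kqr: "k = q * int m + r" unfolding r_def q_def by simp
  have r0: "0 \<le> r" "r < int m" unfolding r_def using m3 by auto
  have eq: "(2 * real_of_int k - 1) * pi / real m = (2 * real_of_int r - 1) * pi / real m + real_of_int q * (2 * pi)"
    using mpos by (simp add: kqr field_simps)
  have ceq: "cos ((2 * real_of_int k - 1) * pi / real m) = cos ((2 * real_of_int r - 1) * pi / real m)"
    unfolding eq using cos.plus_of_int[of "(2 * real_of_int r - 1) * pi / real m" q] by simp
  have c31: "cos (3 * pi / real m) \<le> cos (pi / real m)"
    using m3 mpos by (intro cos_monotone_0_pi_le) (auto simp: field_simps)
  have big: "cos ((2 * real_of_int r - 1) * pi / real m) \<le> cos (3 * pi / real m)" if "r \<ge> 2"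
  proof -
    define y where "y = (2 * real_of_int r - 1) * pi / real m"
    have y1: "3 * pi / real m \<le> y" unfolding y_def using that mpos
      by (simp add: field_simps)
    have "real_of_int r \<le> real m - 1" using r0 by linarith
    then have "2 * real_of_int r - 1 \<le> 2 * real m - 3" by linarith
    then have "(2 * real_of_int r - 1) * (pi / real m) \<le> (2 * real m - 3) * (pi / real m)"
      by (intro mult_right_mono) auto
    also have "(2 * real m - 3) * (pi / real m) = 2 * pi - 3 * pi / real m" using mpos by (simp add: field_simps)
    finally have y2: "y \<le> 2 * pi - 3 * pi / real m" unfolding y_def by simp
    show ?thesis
    proof (cases "y \<le> pi")
      case True
      then show ?thesis unfolding y_def[symmetric] using y1 mpos
        by (intro cos_monotone_0_pi_le) (auto simp: field_simps)
    next
      case False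
      have "cos y = cos (2 * pi - y)" by simp
      also have "\<dots> \<le> cos (3 * pi / real m)"
        using False y2 mpos by (intro cos_monotone_0_pi_le) (auto simp: field_simps)
      finally show ?thesis unfolding y_def .
    qed
  qed
  show "cos ((2 * real_of_int k - 1) * pi / real m) \<le> cos (pi / real m)"
  proof -
    consider "r = 0" | "r = 1" | "r \<ge> 2" using r0 by linarith
    then show ?thesis
    proof cases
      case 1 then show ?thesis unfolding ceq by simp
    next
      case 2 then show ?thesis unfolding ceq by simp
    next
      case 3 then show ?thesis unfolding ceq using big c31 by linarith
    qed
  qed
  assume "k mod int m \<notin> {0, 1}"
  then have "r \<ge> 2" using r0 unfolding r_def by auto
  then show "cos ((2 * real_of_int k - 1) * pi / real m) \<le> cos (3 * pi / real m)"
    unfolding ceq by (rule big)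
qed

definition uu :: "nat \<Rightarrow> nat \<Rightarrow> real^2" where "uu m j = poly_vertex m (j+1) + poly_vertex m (j+2)"
definition Kc :: "nat \<Rightarrow> real" where "Kc m = 2 * (cos (pi / real m))^2"
definition Dc :: "nat \<Rightarrow> real" where "Dc m = 2 * cos (pi / real m) * (cos (pi / real m) - cos (3 * pi / real m))"

lemma inner_uu: "poly_vertex m i \<bullet> uu m j
   = 2 * cos (pi / real m) * cos ((2 * real_of_int (int i - int j - 1) - 1) * pi / real m)"
proof -
  have "poly_vertex m i \<bullet> uu m j = cos ((real i - real (j+1)) * (2*pi/real m)) + cos ((real i - real (j+2)) * (2*pi/real m))"
    unfolding uu_def by (simp add: inner_add_right vinner)
  also have "\<dots> = 2 * cos (((real i - real (j+1)) * (2*pi/real m) + (real i - real (j+2)) * (2*pi/real m)) / 2)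
        * cos (((real i - real (j+1)) * (2*pi/real m) - (real i - real (j+2)) * (2*pi/real m)) / 2)"
    by (rule cos_plus_cos)
  also have "((real i - real (j+1)) * (2*pi/real m) + (real i - real (j+2)) * (2*pi/real m)) / 2
      = (2 * real_of_int (int i - int j - 1) - 1) * pi / real m"
    by (cases "m = 0") (simp_all add: field_simps)
  also have "((real i - real (j+1)) * (2*pi/real m) - (real i - real (j+2)) * (2*pi/real m)) / 2 = pi / real m"
    by (cases "m = 0") (simp_all add: field_simps)
  finally show ?thesis by simp
qed

lemma cpos: assumes "m \<ge> 2" shows "cos (pi / real m) \<ge> 0"
proof -
  have "pi / real m \<le> pi / 2" using assms by (simp add: field_simps)
  moreover have "0 \<le> pi / real m" by simp
  ultimately show ?thesis using pi_gt_zero by (intro cos_ge_zero) linarith+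
qed

lemma Dc_pos: assumes "m \<ge> 3" shows "Dc m > 0"
proof -
  have mpos: "real m > 0" using assms by simp
  have "cos (pi / real m) > 0"
  proof -
    have "pi / real m < pi / 2" using assms by (simp add: field_simps)
    then show ?thesis using assms by (intro cos_gt_zero) auto
  qed
  moreover have "cos (3 * pi / real m) < cos (pi / real m)"
    using assms mpos by (intro cos_monotone_0_pi) (auto simp: field_simps)
  ultimately show ?thesis unfolding Dc_def by simp
qed

lemma inner_uu_le: assumes "m \<ge> 3" shows "poly_vertex m i \<bullet> uu m j \<le> Kc m"
proof -
  have c: "cos ((2 * real_of_int (int i - int j - 1) - 1) * pi / real m) \<le> cos (pi / real m)"
    by (rule cos_odd_bound(1)[OF assms])
  have "poly_vertex m i \<bullet> uu m j \<le> 2 * cos (pi / real m) * cos (pi / real m)"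
    unfolding inner_uu using c cpos[of m] assms
    by (intro mult_left_mono) auto
  then show ?thesis unfolding Kc_def by (simp add: power2_eq_square)
qed

lemma inner_uu_le2: assumes "m \<ge> 3" "(int i - int j - 1) mod int m \<notin> {0, 1}"
  shows "poly_vertex m i \<bullet> uu m j \<le> Kc m - Dc m"
proof -
  have c: "cos ((2 * real_of_int (int i - int j - 1) - 1) * pi / real m) \<le> cos (3 * pi / real m)"
    by (rule cos_odd_bound(2)[OF assms])
  have "poly_vertex m i \<bullet> uu m j \<le> 2 * cos (pi / real m) * cos (3 * pi / real m)"
    unfolding inner_uu using c cpos[of m] assms
    by (intro mult_left_mono) auto
  then show ?thesis unfolding Kc_def Dc_def by (simp add: power2_eq_square algebra_simps)
qed

lemma seg_uu_own: assumes "m \<ge> 3" shows "seg m j s \<bullet> uu m j = Kc m"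
proof -
  have a: "poly_vertex m (j+1) \<bullet> uu m j = Kc m"
    unfolding inner_uu Kc_def using assms
    by (simp add: power2_eq_square)
  have b: "poly_vertex m (j+2) \<bullet> uu m j = Kc m"
    unfolding inner_uu Kc_def using assms
    by (simp add: power2_eq_square)
  have "seg m j s \<bullet> uu m j = (1-s) * (poly_vertex m (j+1) \<bullet> uu m j) + s * (poly_vertex m (j+2) \<bullet> uu m j)"
    unfolding seg_def by (simp add: inner_add_left)
  then show ?thesis unfolding a b by (simp add: algebra_simps)
qed

lemma norm_uu: "norm (uu m j) \<le> 2"
  unfolding uu_def using norm_triangle_ineq[of "poly_vertex m (j+1)" "poly_vertex m (j+2)"]
  by (simp add: vnorm)

lemma seg_uu_other:
  assumes m3: "m \<ge> 3" and j: "j < m" "j' < m" "j \<noteq> j'" and s: "0 \<le> s" "s \<le> 1"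
  shows "seg m j s \<bullet> uu m j' \<le> Kc m - Dc m * min s (1 - s)"
proof -
  define k1 where "k1 = int j - int j'"
  have e1: "int (j+1) - int j' - 1 = k1" unfolding k1_def by simp
  have e2: "int (j+2) - int j' - 1 = k1 + 1" unfolding k1_def by simp
  have k1nz: "k1 mod int m \<noteq> 0"
  proof
    assume "k1 mod int m = 0"
    then have dv: "int m dvd k1" by auto
    have lt: "\<bar>k1\<bar> < int m" unfolding k1_def using j by auto
    have "k1 \<noteq> 0" unfolding k1_def using j by simp
    then have "\<bar>int m\<bar> \<le> \<bar>k1\<bar>" using dv by (rule dvd_imp_le_int)
    then show False using lt by simp
  qed
  have sc: "seg m j s \<bullet> uu m j' = (1 - s) * (poly_vertex m (j+1) \<bullet> uu m j') + s * (poly_vertex m (j+2) \<bullet> uu m j')"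
    unfolding seg_def by (simp add: inner_add_left)
  have D0: "Dc m \<ge> 0" using Dc_pos[OF m3] by simp
  show ?thesis
  proof (cases "k1 mod int m = 1")
    case False
    have "(int (j+1) - int j' - 1) mod int m \<notin> {0,1}" unfolding e1 using False k1nz by blast
    then have "poly_vertex m (j+1) \<bullet> uu m j' \<le> Kc m - Dc m"
      by (intro inner_uu_le2[OF m3])
    moreover have "poly_vertex m (j+2) \<bullet> uu m j' \<le> Kc m" by (rule inner_uu_le[OF m3])
    ultimately have "seg m j s \<bullet> uu m j' \<le> (1 - s) * (Kc m - Dc m) + s * Kc m"
      unfolding sc using s by (intro add_mono mult_left_mono) auto
    also have "\<dots> = Kc m - Dc m * (1 - s)" by (simp add: algebra_simps)
    also have "\<dots> \<le> Kc m - Dc m * min s (1 - s)" using D0 by (intro diff_left_mono mult_left_mono) auto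
    finally show ?thesis .
  next
    case True
    have "(k1 + 1) mod int m = (k1 mod int m + 1) mod int m" by (simp add: mod_add_left_eq)
    also have "\<dots> = 2 mod int m" using True by simp
    also have "\<dots> = 2" using m3 by simp
    finally have "(k1 + 1) mod int m = 2" .
    then have "(int (j+2) - int j' - 1) mod int m \<notin> {0,1}" unfolding e2 by simp
    then have "poly_vertex m (j+2) \<bullet> uu m j' \<le> Kc m - Dc m"
      by (intro inner_uu_le2[OF m3])
    moreover have "poly_vertex m (j+1) \<bullet> uu m j' \<le> Kc m" by (rule inner_uu_le[OF m3])
    ultimately have "seg m j s \<bullet> uu m j' \<le> (1 - s) * Kc m + s * (Kc m - Dc m)"
      unfolding sc using s by (intro add_mono mult_left_mono) auto
    also have "\<dots> = Kc m - Dc m * s" by (simp add: algebra_simps)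
    also have "\<dots> \<le> Kc m - Dc m * min s (1 - s)" using D0 by (intro diff_left_mono mult_left_mono) auto
    finally show ?thesis .
  qed
qed

lemma seg_sep:
  assumes m3: "m \<ge> 3" and j: "j < m" "j' < m" "j \<noteq> j'" and s: "0 \<le> s" "s \<le> 1"
  shows "Dc m * min s (1 - s) \<le> 2 * norm (seg m j s - seg m j' s')"
proof -
  have "Dc m * min s (1 - s) \<le> (seg m j' s' - seg m j s) \<bullet> uu m j'"
    using seg_uu_other[OF assms] seg_uu_own[OF m3, of j' s'] by (simp add: inner_diff_left)
  also have "\<dots> \<le> norm (seg m j' s' - seg m j s) * norm (uu m j')" by (rule Cauchy_Schwarz_ineq2[THEN order_trans[OF abs_ge_self]])
  also have "\<dots> \<le> norm (seg m j' s' - seg m j s) * 2" by (intro mult_left_mono norm_uu) auto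
  finally show ?thesis by (simp add: norm_minus_commute mult.commute)
qed

lemma seg0: "seg m j 0 = poly_vertex m (j+1)" unfolding seg_def by simp
lemma seg1: "seg m j 1 = poly_vertex m (j+2)" unfolding seg_def by simp

lemma curve_seg: assumes "0 \<le> s" "s \<le> 1" shows "poly_curve m (real j + s) = seg m j s"
proof (cases "s = 1")
  case True
  have "\<lfloor>real j + 1\<rfloor> = int j + 1" by linarith
  then have "nat \<lfloor>real j + 1\<rfloor> = j + 1" by simp
  then show ?thesis using True unfolding poly_curve_def seg_def Let_def
    by (simp add: \<open>\<lfloor>real j + 1\<rfloor> = int j + 1\<close>)
next
  case False
  then have "\<lfloor>real j + s\<rfloor> = int j" using assms by linarith
  then show ?thesis unfolding poly_curve_def seg_def Let_def by simp
qed

lemma seg_norm: assumes "0 \<le> s" "s \<le> 1" shows "norm (seg m j s) \<le> 1"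
proof -
  have "norm (seg m j s) \<le> norm ((1 - s) *\<^sub>R poly_vertex m (j+1)) + norm (s *\<^sub>R poly_vertex m (j+2))"
    unfolding seg_def by (rule norm_triangle_ineq)
  also have "\<dots> = (1 - s) + s" using assms by (simp add: vnorm)
  finally show ?thesis by simp
qed

lemma seg_cont: "continuous_on UNIV (seg m j)"
  unfolding seg_def by (intro continuous_intros)

lemma curve_norm: assumes "0 \<le> t" "t \<le> real m" shows "norm (poly_curve m t) \<le> 1"
proof -
  define j where "j = nat \<lfloor>t\<rfloor>"
  have "real j \<le> t" "t < real j + 1" unfolding j_def using assms by linarith+
  then have "poly_curve m t = seg m j (t - real j)"
    using curve_seg[of "t - real j" m j] by simp
  then show ?thesis using seg_norm \<open>real j \<le> t\<close> \<open>t < real j + 1\<close> by simp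
qed

lemma curve_meas: "poly_curve m \<in> borel_measurable borel"
proof -
  define f where "f = (\<lambda>(k::int) (t::real). (1 - (t - of_int k)) *\<^sub>R poly_vertex m (nat k + 1) + (t - of_int k) *\<^sub>R poly_vertex m (nat k + 2))"
  have "poly_curve m = (\<lambda>t. f (floor t) t)"
    unfolding f_def poly_curve_def Let_def by (auto simp: fun_eq_iff)
  moreover have "(\<lambda>t. f (floor t) t) \<in> borel_measurable borel"
  proof (rule measurable_compose_countable'[where f=f and g=floor and I=UNIV])
    fix k :: int
    have "continuous_on UNIV (f k)" unfolding f_def by (intro continuous_intros)
    then show "(\<lambda>x. f k x) \<in> borel_measurable borel"
      by (simp add: borel_measurable_continuous_onI)
  qed auto
  ultimately show ?thesis by simp
qed

lemma sum_integral:
  fixes G :: "real \<Rightarrow> real"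
  assumes "\<And>j. j < n \<Longrightarrow> G integrable_on {real j..real j+1}"
  shows "G integrable_on {0..real n} \<and> integral {0..real n} G = (\<Sum>j<n. integral {real j..real j + 1} G)"
  using assms
proof (induction n)
  case 0
  have "G integrable_on {0..0::real}" using integrable_on_refl[of G "0::real"] by (simp only: cbox_interval)
  then show ?case by simp
next
  case (Suc n)
  then have IH: "G integrable_on {0..real n}" "integral {0..real n} G = (\<Sum>j<n. integral {real j..real j + 1} G)" by auto
  have I2: "G integrable_on {real n..real n + 1}" using Suc.prems by simp
  have int: "G integrable_on {0..real (Suc n)}"
    using Henstock_Kurzweil_Integration.integrable_combine[of 0 "real n" "real n + 1" G] IH(1) I2 by (simp add: add.commute)
  have "integral {0..real n} G + integral {real n..real n + 1} G = integral {0..real n + 1} G"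
    using int by (intro Henstock_Kurzweil_Integration.integral_combine) (auto simp: add.commute)
  then show ?case using int IH by (simp add: add.commute)
qed

lemma uniform_integral:
  fixes g :: "real \<Rightarrow> real"
  assumes m: "m > 0" and g: "g \<in> borel_measurable borel"
  shows "integral\<^sup>L (uniform_measure lborel {0..real m}) g = (LINT t:{0..real m}|lborel. g t) / real m"
proof -
  have e: "emeasure lborel {0..real m} = ennreal (real m)" by simp
  have "uniform_measure lborel {0..real m} = density lborel (\<lambda>x. ennreal (indicator {0..real m} x / real m))"
    unfolding uniform_measure_def e using m
    using divide_ennreal[of 1 "real m"] by (intro density_cong) (auto simp: indicator_def)
  then have "integral\<^sup>L (uniform_measure lborel {0..real m}) g = (LINT x|lborel. (indicator {0..real m} x / real m) *\<^sub>R g x)"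
    using g by (simp add: integral_density)
  also have "\<dots> = (LINT x|lborel. (1 / real m) * (indicator {0..real m} x *\<^sub>R g x))"
    by (intro Bochner_Integration.integral_cong) auto
  also have "\<dots> = (LINT x|lborel. indicator {0..real m} x *\<^sub>R g x) / real m"
    by (simp only: integral_mult_right_zero) simp
  finally show ?thesis by (simp add: set_lebesgue_integral_def)
qed

lemma poly_integral:
  fixes F :: "real^2 \<Rightarrow> real"
  assumes m: "m > 0" and F: "continuous_on UNIV F"
  shows "integral\<^sup>L (poly_measure m) F = (\<Sum>j<m. integral {0..1} (\<lambda>s. F (seg m j s))) / real m"
proof -
  have Fm: "F \<in> borel_measurable borel" using F by (rule borel_measurable_continuous_onI)
  have Gm: "(\<lambda>t. F (poly_curve m t)) \<in> borel_measurable borel"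
    using measurable_comp[OF curve_meas Fm] by (simp add: o_def)
  have "integral\<^sup>L (poly_measure m) F = integral\<^sup>L (uniform_measure lborel {0..real m}) (\<lambda>t. F (poly_curve m t))"
    unfolding poly_measure_def
  proof (rule integral_distr)
    have "measurable (uniform_measure lborel {0..real m}) borel = measurable borel borel"
      by (rule measurable_cong_sets) auto
    then show "poly_curve m \<in> measurable (uniform_measure lborel {0..real m}) borel"
      using curve_meas by simp
  qed (rule Fm)
  also have "\<dots> = (LINT t:{0..real m}|lborel. F (poly_curve m t)) / real m"
    using m Gm by (rule uniform_integral)
  also have "(LINT t:{0..real m}|lborel. F (poly_curve m t)) = integral {0..real m} (\<lambda>t. F (poly_curve m t))"
  proof (rule set_borel_integral_eq_integral(2))
    have "compact (F ` cball 0 1)" using F by (intro compact_continuous_image continuous_on_subset[OF F]) auto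
    then have "bounded (F ` cball 0 1)" by (rule compact_imp_bounded)
    then obtain B where "\<forall>y\<in>F ` cball 0 1. norm y \<le> B" unfolding bounded_iff by blast
    then have B: "\<And>x. x \<in> cball 0 1 \<Longrightarrow> norm (F x) \<le> B" by blast
    show "set_integrable lborel {0..real m} (\<lambda>t. F (poly_curve m t))"
      unfolding set_integrable_def
    proof (rule integrableI_bounded_set_indicator[where B=B])
      show "AE x\<in>{0..real m} in lborel. norm (F (poly_curve m x)) \<le> B"
        using B curve_norm by auto
    qed (use Gm in auto)
  qed
  also have "\<dots> = (\<Sum>j<m. integral {real j..real j + 1} (\<lambda>t. F (poly_curve m t)))"
  proof -
    have "(\<lambda>t. F (poly_curve m t)) integrable_on {real j..real j+1}" for j
    proof -
      have "(\<lambda>t. F (seg m j (t - real j))) integrable_on {real j..real j+1}"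
        by (intro integrable_continuous_interval continuous_on_compose2[OF F] continuous_on_compose2[OF seg_cont]) (auto intro!: continuous_intros)
      then show ?thesis
      proof (rule integrable_eq)
        fix x assume "x \<in> {real j..real j+1}"
        then show "F (seg m j (x - real j)) = F (poly_curve m x)"
          using curve_seg[of "x - real j" m j] by simp
      qed
    qed
    then show ?thesis using sum_integral by blast
  qed
  also have "\<dots> = (\<Sum>j<m. integral {0..1} (\<lambda>s. F (seg m j s)))"
  proof (rule sum.cong[OF refl])
    fix j
    have "integral {real j..real j + 1} (\<lambda>t. F (poly_curve m t)) = integral {0 + real j..1 + real j} (\<lambda>t. F (poly_curve m t))"
      by (simp add: add.commute)
    also have "\<dots> = integral {0..1} ((\<lambda>t. F (poly_curve m t)) \<circ> (+) (real j))"
      by (rule integral_shift_Icc_real[symmetric])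
    also have "\<dots> = integral {0..1} (\<lambda>s. F (seg m j s))"
      by (intro integral_cong) (simp add: curve_seg)
    finally show "integral {real j..real j + 1} (\<lambda>t. F (poly_curve m t)) = integral {0..1} (\<lambda>s. F (seg m j s))" .
  qed
  finally show ?thesis .
qed

definition qerr :: "(real^2) set \<Rightarrow> real^2 \<Rightarrow> real" where
  "qerr C x = Min ((\<lambda>a. (norm (x - a))\<^sup>2) ` C)"

lemma qerr_le: "finite C \<Longrightarrow> a \<in> C \<Longrightarrow> qerr C x \<le> (norm (x - a))\<^sup>2"
  unfolding qerr_def by (intro Min_le) auto

lemma qerr_attain: "finite C \<Longrightarrow> C \<noteq> {} \<Longrightarrow> \<exists>a\<in>C. qerr C x = (norm (x - a))\<^sup>2"
proof -
  assume "finite C" "C \<noteq> {}"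
  then have "qerr C x \<in> (\<lambda>a. (norm (x - a))\<^sup>2) ` C" unfolding qerr_def by (intro Min_in) auto
  then show ?thesis by blast
qed

lemma qerr_nonneg: assumes "finite C" "C \<noteq> {}" shows "qerr C x \<ge> 0"
proof -
  obtain a where "a \<in> C" "qerr C x = (norm (x - a))\<^sup>2" using qerr_attain[OF assms] by blast
  then show ?thesis by simp
qed

lemma qerr_cont: assumes "finite C" "C \<noteq> {}" shows "continuous_on UNIV (qerr C)"
  using assms
proof (induction C rule: finite_ne_induct)
  case (singleton x)
  then show ?case unfolding qerr_def by (simp, intro continuous_intros)
next
  case (insert x F)
  have e: "qerr (insert x F) = (\<lambda>y. min ((norm (y - x))\<^sup>2) (qerr F y))"
    unfolding qerr_def using insert by (auto simp: fun_eq_iff)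
  show ?case unfolding e by (intro continuous_on_min continuous_intros insert.IH)
qed

lemma qerr_seg_cont: assumes "finite C" "C \<noteq> {}" shows "continuous_on A (\<lambda>s. qerr C (seg m j s))"
proof -
  have "continuous_on UNIV (\<lambda>s. qerr C (seg m j s))"
    using continuous_on_compose2[OF qerr_cont[OF assms] seg_cont[of m j]] by simp
  then show ?thesis by (rule continuous_on_subset) simp
qed

lemma vert_in: assumes "m \<ge> 3" "j < m" shows "poly_vertex m (j+1) \<in> poly_vertices m" "poly_vertex m (j+2) \<in> poly_vertices m"
proof -
  show "poly_vertex m (j+1) \<in> poly_vertices m" unfolding poly_vertices_def using assms by auto
  show "poly_vertex m (j+2) \<in> poly_vertices m"
  proof (cases "j + 2 \<le> m")
    case True then show ?thesis unfolding poly_vertices_def by auto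
  next
    case False
    then have "j + 2 = 1 + m" using assms by auto
    then have "poly_vertex m (j+2) = poly_vertex m 1" using vperiod[of m 1] assms by simp
    then show ?thesis unfolding poly_vertices_def using assms by auto
  qed
qed

lemma sqrt_le_of: assumes "0 \<le> b" "x \<le> b\<^sup>2" shows "sqrt x \<le> b"
proof -
  have "sqrt x \<le> sqrt (b\<^sup>2)" using assms(2) by (rule real_sqrt_le_mono)
  then show ?thesis using assms(1) by simp
qed

lemma qerr_seg_bound:
  assumes m3: "m \<ge> 3" and C: "finite C" "poly_vertices m \<subseteq> C" and j: "j < m" and s: "0 \<le> s" "s \<le> 1"
  shows "sqrt (qerr C (seg m j s)) \<le> s * sl m" "sqrt (qerr C (seg m j s)) \<le> (1 - s) * sl m"
proof -
  have L: "sl m > 0" using sl_pos m3 by simp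
  have "qerr C (seg m j s) \<le> (norm (seg m j s - seg m j 0))\<^sup>2"
    using qerr_le[OF C(1)] vert_in[OF m3 j] C(2) unfolding seg0 by blast
  also have "\<dots> = (s * sl m)\<^sup>2" using seg_dist[of m j s 0] m3 s by simp
  finally show "sqrt (qerr C (seg m j s)) \<le> s * sl m"
    using s L by (intro sqrt_le_of) auto
  have "qerr C (seg m j s) \<le> (norm (seg m j s - seg m j 1))\<^sup>2"
    using qerr_le[OF C(1)] vert_in[OF m3 j] C(2) unfolding seg1 by blast
  also have "\<dots> = ((1 - s) * sl m)\<^sup>2" using seg_dist[of m j s 1] m3 s by (simp add: abs_if)
  finally show "sqrt (qerr C (seg m j s)) \<le> (1 - s) * sl m"
    using s L by (intro sqrt_le_of) auto
qed

lemma qerr_lip: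
  assumes m3: "m \<ge> 3" and C: "finite C" "C \<noteq> {}"
  shows "sqrt (qerr C (seg m j s0)) \<le> sqrt (qerr C (seg m j s)) + \<bar>s - s0\<bar> * sl m"
proof -
  obtain a where a: "a \<in> C" "qerr C (seg m j s) = (norm (seg m j s - a))\<^sup>2" using qerr_attain[OF C] by blast
  have "sqrt (qerr C (seg m j s0)) \<le> sqrt ((norm (seg m j s0 - a))\<^sup>2)"
    using qerr_le[OF C(1) a(1)] by (rule real_sqrt_le_mono)
  also have "\<dots> = norm (seg m j s0 - a)" by simp
  also have "\<dots> \<le> norm (seg m j s0 - seg m j s) + norm (seg m j s - a)" using dist_triangle[of "seg m j s0" a "seg m j s"] by (simp add: dist_norm)
  also have "norm (seg m j s0 - seg m j s) = \<bar>s - s0\<bar> * sl m" using seg_dist[of m j s0 s] m3 by (simp add: abs_minus_commute)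
  also have "norm (seg m j s - a) = sqrt (qerr C (seg m j s))" using a(2) by simp
  finally show ?thesis by simp
qed

lemma apriori:
  assumes m3: "m \<ge> 3" and C: "finite C" "poly_vertices m \<subseteq> C" and j: "j < m" and s0: "0 \<le> s0" "s0 \<le> 1"
  shows "(sqrt (qerr C (seg m j s0)))^3 \<le> 8 * sl m * integral {0..1} (\<lambda>s. qerr C (seg m j s))"
proof -
  have Cne: "C \<noteq> {}" using C(2) vert_in(1)[OF m3 j] by auto
  define L where "L = sl m"
  have L: "L > 0" using sl_pos m3 unfolding L_def by simp
  define r where "r = sqrt (qerr C (seg m j s0))"
  have r0: "r \<ge> 0" unfolding r_def using qerr_nonneg[OF C(1) Cne] by simp
  have rs: "r \<le> s0 * L" unfolding r_def L_def using qerr_seg_bound[OF m3 C j s0] by simp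
  define \<delta> where "\<delta> = r / (2 * L)"
  have d0: "0 \<le> \<delta>" unfolding \<delta>_def using r0 L by simp
  have ds: "\<delta> \<le> s0" unfolding \<delta>_def using rs L r0 by (simp add: field_simps)
  have low: "r\<^sup>2 / 4 \<le> qerr C (seg m j s)" if "s \<in> {s0 - \<delta>..s0}" for s
  proof -
    have "r \<le> sqrt (qerr C (seg m j s)) + \<bar>s - s0\<bar> * L"
      unfolding r_def L_def by (rule qerr_lip[OF m3 C(1) Cne])
    moreover have "\<bar>s - s0\<bar> * L \<le> r / 2"
    proof -
      have "\<bar>s - s0\<bar> \<le> \<delta>" using that by auto
      then have "\<bar>s - s0\<bar> * L \<le> \<delta> * L" using L by (intro mult_right_mono) auto
      also have "\<delta> * L = r / 2" unfolding \<delta>_def using L by simp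
      finally show ?thesis .
    qed
    ultimately have "r / 2 \<le> sqrt (qerr C (seg m j s))" by simp
    then have "(r/2)\<^sup>2 \<le> (sqrt (qerr C (seg m j s)))\<^sup>2" using r0 by (intro power_mono) auto
    then show ?thesis using qerr_nonneg[OF C(1) Cne] by (simp add: power_divide)
  qed
  have cont: "continuous_on A (\<lambda>s. qerr C (seg m j s))" for A by (rule qerr_seg_cont[OF C(1) Cne])
  have "\<delta> * (r\<^sup>2 / 4) = integral {s0 - \<delta>..s0} (\<lambda>s. r\<^sup>2 / 4)" using d0 by simp
  also have "\<dots> \<le> integral {s0 - \<delta>..s0} (\<lambda>s. qerr C (seg m j s))"
    by (intro integral_le integrable_continuous_interval cont low) auto
  also have "\<dots> \<le> integral {0..1} (\<lambda>s. qerr C (seg m j s))"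
    using ds s0 qerr_nonneg[OF C(1) Cne]
    by (intro integral_subset_le integrable_continuous_interval cont) auto
  finally have "\<delta> * (r\<^sup>2 / 4) \<le> integral {0..1} (\<lambda>s. qerr C (seg m j s))" .
  then have "8 * L * (\<delta> * (r\<^sup>2 / 4)) \<le> 8 * L * integral {0..1} (\<lambda>s. qerr C (seg m j s))"
    using L by simp
  moreover have "8 * L * (\<delta> * (r\<^sup>2 / 4)) = r^3" unfolding \<delta>_def using L by (simp add: field_simps power2_eq_square power3_eq_cube)
  ultimately show ?thesis unfolding r_def L_def by simp
qed

lemma proj_bound:
  assumes m3: "m \<ge> 3"
  shows "(sl m)\<^sup>2 * (s - ((c - poly_vertex m (j+1)) \<bullet> (poly_vertex m (j+2) - poly_vertex m (j+1))) / (sl m)\<^sup>2)\<^sup>2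
         \<le> (norm (seg m j s - c))\<^sup>2"
proof -
  define u where "u = poly_vertex m (j+2) - poly_vertex m (j+1)"
  define w where "w = c - poly_vertex m (j+1)"
  define L where "L = sl m"
  have L: "L > 0" using sl_pos m3 unfolding L_def by simp
  have uu: "u \<bullet> u = L\<^sup>2" using vdist2[of m j] m3 unfolding u_def L_def by (simp add: power2_norm_eq_inner)
  have e: "seg m j s - c = s *\<^sub>R u - w" unfolding seg_def u_def w_def by (simp add: algebra_simps)
  have n: "(norm (seg m j s - c))\<^sup>2 = s\<^sup>2 * L\<^sup>2 - 2 * s * (w \<bullet> u) + w \<bullet> w"
    unfolding e power2_norm_eq_inner using uu by (simp add: inner_diff_left inner_diff_right inner_commute power2_eq_square algebra_simps)
  have cs: "(w \<bullet> u)\<^sup>2 \<le> (w \<bullet> w) * L\<^sup>2"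
  proof -
    have "\<bar>w \<bullet> u\<bar> \<le> norm w * norm u" by (rule Cauchy_Schwarz_ineq2)
    then have "\<bar>w \<bullet> u\<bar>\<^sup>2 \<le> (norm w * norm u)\<^sup>2" by (intro power_mono) auto
    then show ?thesis using uu by (simp add: power_mult_distrib power2_norm_eq_inner)
  qed
  have "L\<^sup>2 * (s - (w \<bullet> u) / L\<^sup>2)\<^sup>2 = s\<^sup>2 * L\<^sup>2 - 2 * s * (w \<bullet> u) + (w \<bullet> u)\<^sup>2 / L\<^sup>2"
    using L by (simp add: field_simps power2_eq_square)
  also have "(w \<bullet> u)\<^sup>2 / L\<^sup>2 \<le> w \<bullet> w" using cs L by (simp add: divide_le_eq)
  finally show ?thesis unfolding n[folded L_def] u_def[symmetric] w_def[symmetric] L_def[symmetric] by simp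
qed

lemma int_sq:
  fixes a b c :: real
  assumes "a \<le> b"
  shows "integral {a..b} (\<lambda>s. (s - c)\<^sup>2) = ((b - c)^3 - (a - c)^3) / 3"
proof -
  have "((\<lambda>s. (s - c)\<^sup>2) has_integral ((\<lambda>s. (s - c)^3 / 3) b - (\<lambda>s. (s - c)^3 / 3) a)) {a..b}"
  proof (rule fundamental_theorem_of_calculus[OF assms])
    fix x assume "x \<in> {a..b}"
    have "((\<lambda>s. (s - c)^3 / 3) has_real_derivative (x - c)\<^sup>2) (at x within {a..b})"
      by (auto intro!: derivative_eq_intros simp: power2_eq_square)
    then show "((\<lambda>s. (s - c)^3 / 3) has_vector_derivative (x - c)\<^sup>2) (at x within {a..b})"
      by (simp add: has_real_derivative_iff_has_vector_derivative)
  qed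
  then show ?thesis by (simp add: integral_unique diff_divide_distrib)
qed

lemma bathtub:
  fixes E :: "real set"
  assumes E: "E \<in> sets lborel" "E \<subseteq> {0..1}"
  shows "(measure lborel E)^3 / 12 \<le> (LINT s:E|lborel. (s - p)\<^sup>2)"
proof -
  define \<mu> where "\<mu> = measure lborel E"
  define J where "J = {p - \<mu>/2..p + \<mu>/2}"
  define c where "c = (\<mu>/2)\<^sup>2"
  have mu0: "\<mu> \<ge> 0" unfolding \<mu>_def by simp
  have Jm: "measure lborel J = \<mu>" unfolding J_def using mu0 by simp
  have "emeasure lborel E \<le> emeasure lborel {0..1::real}" by (rule emeasure_mono[OF E(2)]) simp
  then have Efin: "emeasure lborel E < \<infinity>"
    by (rule le_less_trans) simp
  have fcont: "continuous_on UNIV (\<lambda>s::real. (s - p)\<^sup>2)" by (intro continuous_intros)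
  have iE: "set_integrable lborel E (\<lambda>s::real. (s - p)\<^sup>2)"
    by (rule set_integrable_subset[OF borel_integrable_atLeastAtMost'[OF continuous_on_subset[OF fcont]] E(1) E(2)]) auto
  have iJ: "set_integrable lborel J (\<lambda>s::real. (s - p)\<^sup>2)"
    unfolding J_def by (rule borel_integrable_atLeastAtMost'[OF continuous_on_subset[OF fcont]]) auto
  have intJ: "(LINT s:J|lborel. (s - p)\<^sup>2) = \<mu>^3 / 12"
  proof -
    have "(LINT s:J|lborel. (s - p)\<^sup>2) = integral J (\<lambda>s. (s - p)\<^sup>2)"
      using iJ by (rule set_borel_integral_eq_integral(2))
    also have "\<dots> = ((\<mu>/2)^3 - (-\<mu>/2)^3) / 3" unfolding J_def using mu0 by (subst int_sq) auto
    also have "\<dots> = \<mu>^3 / 12" by (simp add: power3_eq_cube field_simps)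
    finally show ?thesis .
  qed
  have pw: "0 \<le> ((s - p)\<^sup>2 - c) * (indicator E s - indicator J s)" for s
  proof (cases "s \<in> J")
    case True
    then have "p - \<mu>/2 \<le> s" "s \<le> p + \<mu>/2" unfolding J_def by auto
    then have "\<bar>s - p\<bar> \<le> \<mu>/2" unfolding abs_le_iff by linarith
    then have "(s - p)\<^sup>2 \<le> c" unfolding c_def using mu0
      by (metis abs_ge_zero power2_abs power_mono)
    then show ?thesis using True by (auto simp: indicator_def mult_nonpos_nonpos)
  next
    case False
    then have "\<not> (p - \<mu>/2 \<le> s \<and> s \<le> p + \<mu>/2)" unfolding J_def by auto
    then have "\<mu>/2 \<le> \<bar>s - p\<bar>" by (cases "s \<ge> p") auto
    then have "c \<le> (s - p)\<^sup>2" unfolding c_def using mu0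
      by (metis power2_abs power_mono zero_le_divide_iff zero_le_numeral)
    then show ?thesis using False by (auto simp: indicator_def)
  qed
  have iE': "integrable lborel (\<lambda>s. indicator E s * (s - p)\<^sup>2)" using iE unfolding set_integrable_def by simp
  have iJ': "integrable lborel (\<lambda>s. indicator J s * (s - p)\<^sup>2)" using iJ unfolding set_integrable_def by simp
  have iEi: "integrable lborel (\<lambda>s. c * indicator E s :: real)"
    using Efin E(1) by (intro integrable_mult_right integrable_real_indicator) auto
  have iJi: "integrable lborel (\<lambda>s. c * indicator J s :: real)"
    unfolding J_def by (intro integrable_mult_right integrable_real_indicator) (auto simp: emeasure_lborel_Icc_eq)
  have eq: "(\<lambda>s. ((s - p)\<^sup>2 - c) * (indicator E s - indicator J s))
     = (\<lambda>s. (indicator E s * (s - p)\<^sup>2 - c * indicator E s) - (indicator J s * (s - p)\<^sup>2 - c * indicator J s))"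
    by (auto simp: fun_eq_iff algebra_simps)
  have "0 \<le> (LINT s|lborel. ((s - p)\<^sup>2 - c) * (indicator E s - indicator J s))"
    using pw by (intro Bochner_Integration.integral_nonneg) auto
  also have "\<dots> = ((LINT s|lborel. indicator E s * (s - p)\<^sup>2) - (LINT s|lborel. c * indicator E s))
      - ((LINT s|lborel. indicator J s * (s - p)\<^sup>2) - (LINT s|lborel. c * indicator J s))"
    unfolding eq using iE' iJ' iEi iJi
    by (simp add: Bochner_Integration.integral_diff Bochner_Integration.integrable_diff)
  also have "(LINT s|lborel. c * indicator E s) = c * \<mu>"
    unfolding \<mu>_def using Efin E(1) by (simp add: integral_mult_right_zero)
  also have "(LINT s|lborel. c * indicator J s) = c * \<mu>"
    using Jm unfolding J_def by (simp add: integral_mult_right_zero)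
  also have "(LINT s|lborel. indicator E s * (s - p)\<^sup>2) = (LINT s:E|lborel. (s - p)\<^sup>2)"
    by (simp add: set_lebesgue_integral_def)
  also have "(LINT s|lborel. indicator J s * (s - p)\<^sup>2) = \<mu>^3 / 12"
    using intJ by (simp add: set_lebesgue_integral_def)
  finally show ?thesis unfolding \<mu>_def by simp
qed

definition Ecell :: "nat \<Rightarrow> (real^2) set \<Rightarrow> (nat \<Rightarrow> real^2) \<Rightarrow> nat \<Rightarrow> nat \<Rightarrow> real set" where
  "Ecell m C f j i = {s \<in> {0..1}. (norm (seg m j s - f i))\<^sup>2 = qerr C (seg m j s)
      \<and> (\<forall>k<i. (norm (seg m j s - f k))\<^sup>2 \<noteq> qerr C (seg m j s))}"

locale cfg =
  fixes m :: nat and C :: "(real^2) set" and f :: "nat \<Rightarrow> real^2" and N :: nat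
  assumes m3: "m \<ge> 3" and fin: "finite C" and vin: "poly_vertices m \<subseteq> C"
    and bij: "bij_betw f {..<N} C"
begin

abbreviation "E \<equiv> Ecell m C f"

lemma Cne: "C \<noteq> {}" using vin vert_in(1)[OF m3, of 0] m3 by auto

lemma dcont: "continuous_on UNIV (\<lambda>s. (norm (seg m j s - a))\<^sup>2)"
  using seg_cont[of m j] by (intro continuous_intros) (auto simp: continuous_on_eq_continuous_at)

lemma pcont: "continuous_on UNIV (\<lambda>s. qerr C (seg m j s))"
  by (rule qerr_seg_cont[OF fin Cne])

lemma E_eq: "E j i = {0..1} \<inter> {s. (norm (seg m j s - f i))\<^sup>2 = qerr C (seg m j s)}
    \<inter> (\<Inter>k\<in>{..<i}. {s. (norm (seg m j s - f k))\<^sup>2 \<noteq> qerr C (seg m j s)})"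
  unfolding Ecell_def by auto

lemma E_sets: "E j i \<in> sets lborel"
proof -
  have a: "{s. (norm (seg m j s - f i))\<^sup>2 = qerr C (seg m j s)} \<in> sets borel"
    by (intro borel_closed closed_Collect_eq dcont pcont)
  have b: "(\<Inter>k\<in>{..<i}. {s. (norm (seg m j s - f k))\<^sup>2 \<noteq> qerr C (seg m j s)}) \<in> sets borel"
  proof (cases "i = 0")
    case True then show ?thesis by simp
  next
    case False
    then show ?thesis
      by (intro sets.finite_INT borel_open open_Collect_neq dcont pcont) auto
  qed
  show ?thesis unfolding E_eq using a b by simp
qed

lemma E_sub: "E j i \<subseteq> {0..1}" unfolding Ecell_def by blast

lemma E_prop: "s \<in> E j i \<Longrightarrow> qerr C (seg m j s) = (norm (seg m j s - f i))\<^sup>2"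
  unfolding Ecell_def mem_Collect_eq by (elim conjE) (rule sym)

lemma E_disj: assumes "s \<in> E j i1" "s \<in> E j i2" shows "i1 = i2"
proof (rule ccontr)
  have A: "(norm (seg m j s - f i)) ^ 2 = qerr C (seg m j s)" if "s \<in> E j i" for i
    using that unfolding Ecell_def by blast
  have B: "(norm (seg m j s - f k)) ^ 2 \<noteq> qerr C (seg m j s)" if "s \<in> E j i" "k < i" for i k
    using that unfolding Ecell_def by blast
  assume "i1 \<noteq> i2"
  then consider "i1 < i2" | "i2 < i1" by linarith
  then show False
  proof cases
    case 1 then show False using A[OF assms(1)] B[OF assms(2)] by blast
  next
    case 2 then show False using A[OF assms(2)] B[OF assms(1)] by blast
  qed
qed

lemma E_cover: assumes "s \<in> {0..1}" shows "\<exists>i<N. s \<in> E j i"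
proof -
  obtain a where a: "a \<in> C" "qerr C (seg m j s) = (norm (seg m j s - a))\<^sup>2"
    using qerr_attain[OF fin Cne] by blast
  have "a \<in> f ` {..<N}" using bij_betw_imp_surj_on[OF bij] a(1) by simp
  then obtain i where i: "i < N" "f i = a" by blast
  define P where "P = (\<lambda>k. (norm (seg m j s - f k))\<^sup>2 = qerr C (seg m j s))"
  have Pi: "P i" unfolding P_def using i a by simp
  define i0 where "i0 = (LEAST k. P k)"
  have P0: "P i0" unfolding i0_def using Pi by (rule LeastI)
  have le: "i0 \<le> i" unfolding i0_def using Pi by (rule Least_le)
  have nP: "\<not> P k" if "k < i0" for k using that unfolding i0_def by (rule not_less_Least)
  have "(norm (seg m j s - f i0))\<^sup>2 = qerr C (seg m j s)" using P0 unfolding P_def .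
  moreover have "\<forall>k<i0. (norm (seg m j s - f k))\<^sup>2 \<noteq> qerr C (seg m j s)" using nP unfolding P_def by blast
  ultimately have "s \<in> E j i0" unfolding Ecell_def using assms by blast
  moreover have "i0 < N" using le i(1) by linarith
  ultimately show ?thesis by blast
qed

lemma E_fin: "emeasure lborel (E j i) \<noteq> \<infinity>"
proof -
  have s: "{0..1::real} \<in> sets lborel" by simp
  have "emeasure lborel (E j i) \<le> emeasure lborel {0..1::real}" by (rule emeasure_mono[OF E_sub s])
  moreover have "emeasure lborel {0..1::real} < \<infinity>" by simp
  ultimately have "emeasure lborel (E j i) < \<infinity>" by (rule le_less_trans)
  then show ?thesis by (rule less_imp_neq)
qed

lemma E_union: "(\<Union>i\<in>{..<N}. E j i) = {0..1}"
proof
  show "(\<Union>i\<in>{..<N}. E j i) \<subseteq> {0..1}" using E_sub by blast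
  show "{0..1} \<subseteq> (\<Union>i\<in>{..<N}. E j i)"
  proof
    fix s :: real assume "s \<in> {0..1}"
    then obtain i where "i < N" "s \<in> E j i" using E_cover by blast
    then show "s \<in> (\<Union>i\<in>{..<N}. E j i)" by blast
  qed
qed

lemma E_disjoint: "disjoint_family_on (E j) (A::nat set)"
  unfolding disjoint_family_on_def
proof (intro ballI impI)
  fix i1 i2 :: nat assume "i1 \<noteq> i2"
  then show "E j i1 \<inter> E j i2 = {}" using E_disj[of _ j i1 i2] by blast
qed

lemma sum_meas: "(\<Sum>i<N. measure lborel (E j i)) = 1"
proof -
  have "measure lborel (\<Union>i\<in>{..<N}. E j i) = (\<Sum>i<N. measure lborel (E j i))"
    using E_sets[of j] by (intro measure_finite_Union E_disjoint E_fin) auto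
  then show ?thesis unfolding E_union by simp
qed

lemma pointwise: "indicator {0..1} s * qerr C (seg m j s)
   = (\<Sum>i<N. indicator (E j i) s * (norm (seg m j s - f i))\<^sup>2)"
proof (cases "s \<in> {0..1}")
  case False
  then have "s \<notin> E j i" for i using E_sub by blast
  then have "(\<Sum>i<N. indicator (E j i) s * (norm (seg m j s - f i))\<^sup>2) = 0" by simp
  then show ?thesis using False by simp
next
  case True
  then obtain i0 where i0: "i0 < N" "s \<in> E j i0" using E_cover by blast
  have "(\<Sum>i<N. indicator (E j i) s * (norm (seg m j s - f i))\<^sup>2)
      = (\<Sum>i<N. if i = i0 then (norm (seg m j s - f i0))\<^sup>2 else 0)"
  proof (rule sum.cong[OF refl])
    fix i assume "i \<in> {..<N}"
    show "indicator (E j i) s * (norm (seg m j s - f i))\<^sup>2 = (if i = i0 then (norm (seg m j s - f i0))\<^sup>2 else 0)"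
    proof (cases "i = i0")
      case True
      then show ?thesis using i0(2) by simp
    next
      case False
      then have "s \<notin> E j i" using E_disj[of s j i i0] i0(2) by blast
      then show ?thesis using False by simp
    qed
  qed
  also have "\<dots> = (norm (seg m j s - f i0))\<^sup>2" using i0 by simp
  also have "\<dots> = qerr C (seg m j s)" using E_prop[OF i0(2)] by simp
  finally show ?thesis using True by simp
qed

lemma dint: "set_integrable lborel (E j i) (\<lambda>s. (norm (seg m j s - a))\<^sup>2)"
  by (rule set_integrable_subset[OF borel_integrable_atLeastAtMost'[OF continuous_on_subset[OF dcont]] E_sets E_sub]) auto

lemma int_decomp: "integral {0..1} (\<lambda>s. qerr C (seg m j s))
   = (\<Sum>i<N. LINT s:E j i|lborel. (norm (seg m j s - f i))\<^sup>2)"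
proof -
  have si: "set_integrable lborel {0..1} (\<lambda>s. qerr C (seg m j s))"
    by (rule borel_integrable_atLeastAtMost'[OF continuous_on_subset[OF pcont]]) auto
  have "integral {0..1} (\<lambda>s. qerr C (seg m j s)) = (LINT s:{0..1}|lborel. qerr C (seg m j s))"
    using set_borel_integral_eq_integral(2)[OF si] by simp
  also have "\<dots> = (LINT s|lborel. (\<Sum>i<N. indicator (E j i) s * (norm (seg m j s - f i))\<^sup>2))"
    unfolding set_lebesgue_integral_def using pointwise by simp
  also have "\<dots> = (\<Sum>i<N. LINT s|lborel. indicator (E j i) s * (norm (seg m j s - f i))\<^sup>2)"
    using dint unfolding set_integrable_def by (intro Bochner_Integration.integral_sum) auto
  also have "\<dots> = (\<Sum>i<N. LINT s:E j i|lborel. (norm (seg m j s - f i))\<^sup>2)"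
    unfolding set_lebesgue_integral_def by simp
  finally show ?thesis .
qed

lemma cell_low: "(sl m)\<^sup>2 * (measure lborel (E j i))^3 / 12 \<le> (LINT s:E j i|lborel. (norm (seg m j s - f i))\<^sup>2)"
proof -
  define p where "p = ((f i - poly_vertex m (j+1)) \<bullet> (poly_vertex m (j+2) - poly_vertex m (j+1))) / (sl m)\<^sup>2"
  have "(sl m)\<^sup>2 * (measure lborel (E j i))^3 / 12 \<le> (sl m)\<^sup>2 * (LINT s:E j i|lborel. (s - p)\<^sup>2)"
  proof -
    have "(measure lborel (E j i))^3 / 12 \<le> (LINT s:E j i|lborel. (s - p)\<^sup>2)"
      by (rule bathtub[OF E_sets E_sub])
    then have "(sl m)\<^sup>2 * ((measure lborel (E j i))^3 / 12) \<le> (sl m)\<^sup>2 * (LINT s:E j i|lborel. (s - p)\<^sup>2)"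
      by (rule mult_left_mono) simp
    then show ?thesis by simp
  qed
  also have "\<dots> = (LINT s:E j i|lborel. (sl m)\<^sup>2 * (s - p)\<^sup>2)"
    by (simp add: set_integral_mult_right)
  also have "\<dots> \<le> (LINT s:E j i|lborel. (norm (seg m j s - f i))\<^sup>2)"
  proof (rule set_integral_mono)
    show "set_integrable lborel (E j i) (\<lambda>s. (sl m)\<^sup>2 * (s - p)\<^sup>2)"
      by (rule set_integrable_subset[OF borel_integrable_atLeastAtMost' E_sets E_sub]) (intro continuous_intros)
    show "set_integrable lborel (E j i) (\<lambda>s. (norm (seg m j s - f i))\<^sup>2)" by (rule dint)
    fix s show "(sl m)\<^sup>2 * (s - p)\<^sup>2 \<le> (norm (seg m j s - f i))\<^sup>2"
      unfolding p_def by (rule proj_bound[OF m3])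
  qed
  finally show ?thesis .
qed

lemma side_low: "(sl m)\<^sup>2 / 12 * (\<Sum>i<N. (measure lborel (E j i))^3) \<le> integral {0..1} (\<lambda>s. qerr C (seg m j s))"
  unfolding int_decomp sum_distrib_left
  using cell_low by (intro sum_mono) (simp add: field_simps)

end

lemma power_mean3:
  fixes x :: "'a \<Rightarrow> real"
  assumes "finite A" "\<And>i. i \<in> A \<Longrightarrow> x i \<ge> 0"
  shows "(\<Sum>i\<in>A. x i)^3 \<le> (real (card A))\<^sup>2 * (\<Sum>i\<in>A. (x i)^3)"
proof -
  define S where "S = (\<Sum>i\<in>A. x i)"
  have S0: "S \<ge> 0" unfolding S_def using assms by (intro sum_nonneg) auto
  have c1: "S\<^sup>2 \<le> real (card A) * (\<Sum>i\<in>A. (x i)\<^sup>2)"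
  proof -
    have "(\<Sum>i\<in>A. 1 * x i)\<^sup>2 \<le> (\<Sum>i\<in>A. 1\<^sup>2) * (\<Sum>i\<in>A. (x i)\<^sup>2)"
      by (rule Cauchy_Schwarz_ineq_sum)
    then show ?thesis unfolding S_def by simp
  qed
  have c2: "(\<Sum>i\<in>A. (x i)\<^sup>2)\<^sup>2 \<le> S * (\<Sum>i\<in>A. (x i)^3)"
  proof -
    have "(\<Sum>i\<in>A. sqrt (x i) * (x i * sqrt (x i)))\<^sup>2 \<le> (\<Sum>i\<in>A. (sqrt (x i))\<^sup>2) * (\<Sum>i\<in>A. (x i * sqrt (x i))\<^sup>2)"
      by (rule Cauchy_Schwarz_ineq_sum)
    moreover have "(\<Sum>i\<in>A. sqrt (x i) * (x i * sqrt (x i))) = (\<Sum>i\<in>A. (x i)\<^sup>2)"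
      using assms(2) by (intro sum.cong) (auto simp: power2_eq_square)
    moreover have "(\<Sum>i\<in>A. (sqrt (x i))\<^sup>2) = S" unfolding S_def using assms(2) by (intro sum.cong) auto
    moreover have "(\<Sum>i\<in>A. (x i * sqrt (x i))\<^sup>2) = (\<Sum>i\<in>A. (x i)^3)"
      using assms(2) by (intro sum.cong) (auto simp: power_mult_distrib power3_eq_cube power2_eq_square)
    ultimately show ?thesis by simp
  qed
  show ?thesis
  proof (cases "S = 0")
    case True
    have "0 \<le> (\<Sum>i\<in>A. (x i)^3)" using assms(2) by (intro sum_nonneg) auto
    then show ?thesis using True unfolding S_def by simp
  next
    case False
    then have Sp: "S > 0" using S0 by simp
    have "S^4 = (S\<^sup>2)\<^sup>2" by simp
    also have "\<dots> \<le> (real (card A) * (\<Sum>i\<in>A. (x i)\<^sup>2))\<^sup>2"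
      using c1 S0 by (intro power_mono) auto
    also have "\<dots> = (real (card A))\<^sup>2 * (\<Sum>i\<in>A. (x i)\<^sup>2)\<^sup>2" by (simp add: power_mult_distrib)
    also have "\<dots> \<le> (real (card A))\<^sup>2 * (S * (\<Sum>i\<in>A. (x i)^3))"
      using c2 by (intro mult_left_mono) auto
    finally have "S * S^3 \<le> S * ((real (card A))\<^sup>2 * (\<Sum>i\<in>A. (x i)^3))"
      by (simp add: power_numeral_reduce algebra_simps)
    then show ?thesis unfolding S_def[symmetric] using Sp by simp
  qed
qed

lemma cube_sum_single:
  fixes y :: "'a \<Rightarrow> real"
  assumes "finite A" "\<And>j1 j2. j1 \<in> A \<Longrightarrow> j2 \<in> A \<Longrightarrow> j1 \<noteq> j2 \<Longrightarrow> y j1 = 0 \<or> y j2 = 0"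
  shows "(\<Sum>j\<in>A. (y j)^3) = (\<Sum>j\<in>A. y j)^3"
proof (cases "\<exists>j0\<in>A. y j0 \<noteq> 0")
  case True
  then obtain j0 where j0: "j0 \<in> A" "y j0 \<noteq> 0" by blast
  have z: "y j = 0" if "j \<in> A" "j \<noteq> j0" for j using assms(2)[OF that(1) j0(1) that(2)] j0 by auto
  have "(\<Sum>j\<in>A. (y j)^3) = (\<Sum>j\<in>A. if j = j0 then (y j0)^3 else 0)"
    using z by (intro sum.cong) auto
  also have "\<dots> = (y j0)^3" using j0 assms(1) by simp
  also have "y j0 = (\<Sum>j\<in>A. if j = j0 then y j0 else 0)" using j0 assms(1) by simp
  also have "(\<Sum>j\<in>A. if j = j0 then y j0 else 0) = (\<Sum>j\<in>A. y j)"
    using z by (intro sum.cong) auto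
  finally show ?thesis .
next
  case False
  then show ?thesis by simp
qed


context cfg begin

definition multi :: "nat \<Rightarrow> bool" where
  "multi i \<longleftrightarrow> (\<exists>j1<m. \<exists>j2<m. j1 \<noteq> j2 \<and> E j1 i \<noteq> {} \<and> E j2 i \<noteq> {})"

lemma multi_near:
  assumes eps: "\<forall>j<m. \<forall>s\<in>{0..1}. sqrt (qerr C (seg m j s)) \<le> \<epsilon>"
    and j: "j < m" "j' < m" "j \<noteq> j'" and s: "s \<in> E j i" "s' \<in> E j' i"
  shows "Dc m * min s (1 - s) \<le> 4 * \<epsilon>"
proof -
  have "s \<in> {0..1}" using E_sub s(1) by blast
  then have s01: "0 \<le> s" "s \<le> 1" by auto
  have s01': "s' \<in> {0..1}" using E_sub s(2) by blast
  have "Dc m * min s (1 - s) \<le> 2 * norm (seg m j s - seg m j' s')"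
    by (rule seg_sep[OF m3 j s01])
  also have "norm (seg m j s - seg m j' s') \<le> norm (seg m j s - f i) + norm (seg m j' s' - f i)"
    using dist_triangle[of "seg m j s" "seg m j' s'" "f i"] by (simp add: dist_norm norm_minus_commute)
  also have "norm (seg m j s - f i) = sqrt (qerr C (seg m j s))" using E_prop[OF s(1)] by simp
  also have "norm (seg m j' s' - f i) = sqrt (qerr C (seg m j' s'))" using E_prop[OF s(2)] by simp
  also have "sqrt (qerr C (seg m j s)) \<le> \<epsilon>" using eps j(1) s01 by auto
  also have "sqrt (qerr C (seg m j' s')) \<le> \<epsilon>" using eps j(2) s01' by auto
  finally show ?thesis by simp
qed

lemma multi_meas:
  assumes eps: "\<forall>j<m. \<forall>s\<in>{0..1}. sqrt (qerr C (seg m j s)) \<le> \<epsilon>" and e0: "\<epsilon> \<ge> 0"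
    and j: "j < m" and M: "M \<subseteq> {..<N}" and Mm: "\<And>i. i \<in> M \<Longrightarrow> \<exists>j'<m. j' \<noteq> j \<and> E j' i \<noteq> {}"
  shows "(\<Sum>i\<in>M. measure lborel (E j i)) \<le> 8 * \<epsilon> / Dc m"
proof -
  have D: "Dc m > 0" by (rule Dc_pos[OF m3])
  define \<eta> where "\<eta> = 4 * \<epsilon> / Dc m"
  have eta0: "\<eta> \<ge> 0" unfolding \<eta>_def using e0 D by simp
  define B where "B = {0..\<eta>} \<union> {1 - \<eta>..1}"
  have finM: "finite M" using M finite_subset by blast
  have sub: "(\<Union>i\<in>M. E j i) \<subseteq> B"
  proof
    fix s assume "s \<in> (\<Union>i\<in>M. E j i)"
    then obtain i where i: "i \<in> M" "s \<in> E j i" by blast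
    obtain j' where j': "j' < m" "j' \<noteq> j" "E j' i \<noteq> {}" using Mm[OF i(1)] by blast
    then obtain s' where s': "s' \<in> E j' i" by blast
    have "Dc m * min s (1 - s) \<le> 4 * \<epsilon>"
      using multi_near[OF eps j j'(1) _ i(2) s'] j'(2) by auto
    then have "min s (1 - s) \<le> \<eta>" unfolding \<eta>_def using D by (simp add: field_simps)
    moreover have "s \<in> {0..1}" using E_sub i(2) by blast
    ultimately show "s \<in> B" unfolding B_def by (cases "s \<le> 1 - s") auto
  qed
  have Bs: "B \<in> sets lborel" unfolding B_def by simp
  have Bf: "B \<in> fmeasurable lborel"
  proof (rule fmeasurableI[OF Bs])
    have "B \<subseteq> {min 0 (1 - \<eta>)..max \<eta> 1}" unfolding B_def by auto
    then have "emeasure lborel B \<le> emeasure lborel {min 0 (1 - \<eta>)..max \<eta> 1}" by (intro emeasure_mono) auto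
    also have "\<dots> < \<infinity>" by simp
    finally show "emeasure lborel B < \<infinity>" .
  qed
  have "(\<Sum>i\<in>M. measure lborel (E j i)) = measure lborel (\<Union>i\<in>M. E j i)"
    using E_sets by (intro measure_finite_Union[symmetric] finM E_disjoint E_fin) auto
  also have "\<dots> \<le> measure lborel B"
  proof (rule measure_mono_fmeasurable[OF sub _ Bf])
    show "(\<Union>i\<in>M. E j i) \<in> sets lborel" using E_sets finM by (intro sets.finite_UN) auto
  qed
  also have "\<dots> \<le> measure lborel {0..\<eta>} + measure lborel {1 - \<eta>..1}"
    unfolding B_def by (intro measure_Un_le) auto
  also have "\<dots> = 2 * \<eta>" using eta0 by simp
  finally show ?thesis unfolding \<eta>_def by simp
qed

theorem lower:
  assumes eps: "\<forall>j<m. \<forall>s\<in>{0..1}. sqrt (qerr C (seg m j s)) \<le> \<epsilon>" and e0: "\<epsilon> \<ge> 0"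
  shows "(sl m)\<^sup>2 / 12 * (real m - 8 * real m * \<epsilon> / Dc m)^3
     \<le> (real N)\<^sup>2 * (\<Sum>j<m. integral {0..1} (\<lambda>s. qerr C (seg m j s)))"
proof -
  define x where "x i = (\<Sum>j<m. measure lborel (E j i))" for i
  define MU where "MU = {i \<in> {..<N}. multi i}"
  define NM where "NM = {i \<in> {..<N}. \<not> multi i}"
  have x0: "x i \<ge> 0" for i unfolding x_def by (intro sum_nonneg) auto
  have s1: "(\<Sum>i<N. x i) = real m"
  proof -
    have "(\<Sum>i<N. x i) = (\<Sum>j<m. \<Sum>i<N. measure lborel (E j i))" unfolding x_def by (rule sum.swap)
    also have "\<dots> = (\<Sum>j<m. 1)" using sum_meas by simp
    finally show ?thesis by simp
  qed
  have s2: "(\<Sum>i\<in>MU. x i) \<le> 8 * real m * \<epsilon> / Dc m"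
  proof -
    have "(\<Sum>i\<in>MU. x i) = (\<Sum>j<m. \<Sum>i\<in>MU. measure lborel (E j i))"
      unfolding x_def by (rule sum.swap)
    also have "\<dots> \<le> (\<Sum>j<m. 8 * \<epsilon> / Dc m)"
    proof (rule sum_mono)
      fix j assume j: "j \<in> {..<m}"
      show "(\<Sum>i\<in>MU. measure lborel (E j i)) \<le> 8 * \<epsilon> / Dc m"
      proof (rule multi_meas[OF eps e0])
        show "j < m" using j by simp
        show "MU \<subseteq> {..<N}" unfolding MU_def by auto
        fix i assume "i \<in> MU"
        then obtain j1 j2 where jj: "j1 < m" "j2 < m" "j1 \<noteq> j2" "E j1 i \<noteq> {}" "E j2 i \<noteq> {}"
          unfolding MU_def multi_def by blast
        show "\<exists>j'<m. j' \<noteq> j \<and> E j' i \<noteq> {}"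
        proof (cases "j1 = j")
          case True then show ?thesis using jj by blast
        next
          case False then show ?thesis using jj by blast
        qed
      qed
    qed
    also have "\<dots> = 8 * real m * \<epsilon> / Dc m" by simp
    finally show ?thesis .
  qed
  have split: "(\<Sum>i<N. x i) = (\<Sum>i\<in>MU. x i) + (\<Sum>i\<in>NM. x i)"
  proof -
    have "(\<Sum>i\<in>MU. x i) = (\<Sum>i<N. if multi i then x i else 0)" unfolding MU_def by (rule sum.inter_filter) simp
    moreover have "(\<Sum>i\<in>NM. x i) = (\<Sum>i<N. if \<not> multi i then x i else 0)" unfolding NM_def by (rule sum.inter_filter) simp
    ultimately show ?thesis by (simp add: sum.distrib[symmetric] if_distrib) (intro sum.cong, auto)
  qed
  have s3: "real m - 8 * real m * \<epsilon> / Dc m \<le> (\<Sum>i\<in>NM. x i)" using s1 s2 split by linarith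
  have cube: "(\<Sum>j<m. (measure lborel (E j i))^3) = (x i)^3" if "i \<in> NM" for i
    unfolding x_def
  proof (rule cube_sum_single)
    fix j1 j2 assume "j1 \<in> {..<m}" "j2 \<in> {..<m}" "j1 \<noteq> j2"
    then have "E j1 i = {} \<or> E j2 i = {}" using that unfolding NM_def multi_def by auto
    then show "measure lborel (E j1 i) = 0 \<or> measure lborel (E j2 i) = 0" by auto
  qed simp
  have "(sl m)\<^sup>2 / 12 * (real m - 8 * real m * \<epsilon> / Dc m)^3 \<le> (sl m)\<^sup>2 / 12 * (\<Sum>i\<in>NM. x i)^3"
    using s3 by (intro mult_left_mono power_mono_odd) auto
  also have "\<dots> \<le> (sl m)\<^sup>2 / 12 * ((real (card NM))\<^sup>2 * (\<Sum>i\<in>NM. (x i)^3))"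
    using x0 unfolding NM_def by (intro mult_left_mono power_mean3) auto
  also have "\<dots> \<le> (sl m)\<^sup>2 / 12 * ((real N)\<^sup>2 * (\<Sum>i\<in>NM. (x i)^3))"
  proof -
    have "card NM \<le> N" unfolding NM_def using card_mono[of "{..<N}" "{i \<in> {..<N}. \<not> multi i}"] by auto
    then have "(real (card NM))\<^sup>2 \<le> (real N)\<^sup>2" by (intro power_mono) auto
    moreover have "0 \<le> (\<Sum>i\<in>NM. (x i)^3)" using x0 by (intro sum_nonneg) auto
    ultimately show ?thesis by (intro mult_left_mono) (auto intro: mult_right_mono)
  qed
  finally have A: "(sl m)\<^sup>2 / 12 * (real m - 8 * real m * \<epsilon> / Dc m)^3 \<le> (sl m)\<^sup>2 / 12 * ((real N)\<^sup>2 * (\<Sum>i\<in>NM. (x i)^3))" .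
  have "(\<Sum>i\<in>NM. (x i)^3) = (\<Sum>i\<in>NM. \<Sum>j<m. (measure lborel (E j i))^3)"
    using cube by simp
  also have "\<dots> \<le> (\<Sum>i<N. \<Sum>j<m. (measure lborel (E j i))^3)"
    unfolding NM_def by (intro sum_mono2) (auto intro!: sum_nonneg)
  also have "\<dots> = (\<Sum>j<m. \<Sum>i<N. (measure lborel (E j i))^3)" by (rule sum.swap)
  finally have B: "(\<Sum>i\<in>NM. (x i)^3) \<le> (\<Sum>j<m. \<Sum>i<N. (measure lborel (E j i))^3)" .
  have "(sl m)\<^sup>2 / 12 * ((real N)\<^sup>2 * (\<Sum>i\<in>NM. (x i)^3)) \<le> (sl m)\<^sup>2 / 12 * ((real N)\<^sup>2 * (\<Sum>j<m. \<Sum>i<N. (measure lborel (E j i))^3))"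
    using B by (intro mult_left_mono) auto
  also have "\<dots> = (real N)\<^sup>2 * (\<Sum>j<m. (sl m)\<^sup>2 / 12 * (\<Sum>i<N. (measure lborel (E j i))^3))"
    by (simp add: sum_distrib_left mult_ac)
  finally have "(sl m)\<^sup>2 / 12 * (real m - 8 * real m * \<epsilon> / Dc m)^3
      \<le> (real N)\<^sup>2 * (\<Sum>j<m. (sl m)\<^sup>2 / 12 * (\<Sum>i<N. (measure lborel (E j i))^3))"
    using A by linarith
  also have "\<dots> \<le> (real N)\<^sup>2 * (\<Sum>j<m. integral {0..1} (\<lambda>s. qerr C (seg m j s)))"
    using side_low by (intro mult_left_mono sum_mono) auto
  finally show ?thesis .
qed

end

lemma sum_integral_h:
  fixes G :: "real \<Rightarrow> real"
  assumes G: "continuous_on UNIV G" and h: "h \<ge> 0"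
  shows "integral {0..real n * h} G = (\<Sum>i<n. integral {real i * h..real (Suc i) * h} G)"
proof (induction n)
  case 0
  then show ?case by simp
next
  case (Suc n)
  have "integral {0..real n * h} G + integral {real n * h..real (Suc n) * h} G = integral {0..real (Suc n) * h} G"
    using h by (intro Henstock_Kurzweil_Integration.integral_combine integrable_continuous_interval continuous_on_subset[OF G])
      (auto simp: distrib_right)
  then show ?case using Suc by simp
qed

lemma pv_fin: "finite (poly_vertices m)" unfolding poly_vertices_def by simp

lemma pv_card: "card (poly_vertices m) \<le> m"
  unfolding poly_vertices_def using card_image_le[of "{1..m}" "poly_vertex m"] by simp

definition alph :: "nat \<Rightarrow> nat \<Rightarrow> (real^2) set" where
  "alph m k = (\<lambda>(j, i). seg m j (real i / real (k+1))) ` ({..<m} \<times> {1..k})"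

lemma alph_fin: "finite (alph m k)" unfolding alph_def by simp

lemma alph_card: "card (alph m k) \<le> m * k"
proof -
  have "card (alph m k) \<le> card ({..<m} \<times> {1..k})" unfolding alph_def by (rule card_image_le) simp
  also have "\<dots> = m * k" by (simp add: card_cartesian_product)
  finally show ?thesis .
qed

lemma grid_in:
  assumes m3: "m \<ge> 3" and j: "j < m" and i: "i \<le> k + 1"
  shows "seg m j (real i / real (k+1)) \<in> alph m k \<union> poly_vertices m"
proof -
  consider "i = 0" | "i = k + 1" | "1 \<le> i \<and> i \<le> k" using i by linarith
  then show ?thesis
  proof cases
    case 1 then show ?thesis using vert_in(1)[OF m3 j] by (simp add: seg0)
  next
    case 2
    then have "real i / real (k+1) = 1" by simp
    then show ?thesis using vert_in(2)[OF m3 j] by (simp add: seg1)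
  next
    case 3
    then have "(j, i) \<in> {..<m} \<times> {1..k}" using j by auto
    then show ?thesis unfolding alph_def by (intro UnI1 image_eqI[where x="(j,i)"]) auto
  qed
qed

lemma grid_bound:
  assumes m3: "m \<ge> 3" and j: "j < m" and i: "i \<le> k + 1"
  shows "qerr (alph m k \<union> poly_vertices m) (seg m j s) \<le> (sl m)\<^sup>2 * (s - real i / real (k+1))\<^sup>2"
proof -
  have "qerr (alph m k \<union> poly_vertices m) (seg m j s) \<le> (norm (seg m j s - seg m j (real i / real (k+1))))\<^sup>2"
    using grid_in[OF assms] alph_fin by (intro qerr_le) (auto simp: poly_vertices_def)
  also have "\<dots> = (sl m)\<^sup>2 * (s - real i / real (k+1))\<^sup>2"
    using seg_dist[of m j s] m3 by (simp add: power_mult_distrib)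
  finally show ?thesis .
qed

lemma cell_up:
  assumes m3: "m \<ge> 3" and j: "j < m" and i: "i \<le> k"
  shows "integral {real i * (1 / real (k+1))..real (Suc i) * (1 / real (k+1))} (\<lambda>s. qerr (alph m k \<union> poly_vertices m) (seg m j s))
    \<le> (sl m)\<^sup>2 * (1 / real (k+1))^3 / 12"
proof -
  define h where "h = 1 / real (k+1)"
  define a where "a = real i * h"
  define b where "b = real (Suc i) * h"
  define c where "c = a + h / 2"
  define C where "C = alph m k \<union> poly_vertices m"
  define G where "G = (\<lambda>s. qerr C (seg m j s))"
  have h0: "h > 0" unfolding h_def by simp
  have ba: "b = a + h" unfolding a_def b_def by (simp add: algebra_simps)
  have Cf: "finite C" "C \<noteq> {}" unfolding C_def using alph_fin pv_fin vert_in(1)[OF m3 j] by auto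
  have Gc: "continuous_on A G" for A unfolding G_def by (rule qerr_seg_cont[OF Cf])
  have ai: "real i / real (k+1) = a" unfolding a_def h_def by simp
  have bi: "real (Suc i) / real (k+1) = b" unfolding b_def h_def by simp
  have "integral {a..c} G \<le> integral {a..c} (\<lambda>s. (sl m)\<^sup>2 * (s - a)\<^sup>2)"
  proof (rule integral_le)
    show "G integrable_on {a..c}" by (intro integrable_continuous_interval Gc)
    show "(\<lambda>s. (sl m)\<^sup>2 * (s - a)\<^sup>2) integrable_on {a..c}" by (intro integrable_continuous_interval continuous_intros)
    fix s show "G s \<le> (sl m)\<^sup>2 * (s - a)\<^sup>2"
      unfolding G_def C_def using grid_bound[OF m3 j, of i k s] i ai by simp
  qed
  also have "\<dots> = (sl m)\<^sup>2 * (((c - a)^3 - (a - a)^3) / 3)"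
    using h0 unfolding c_def by (simp add: int_sq)
  also have "\<dots> = (sl m)\<^sup>2 * h^3 / 24" unfolding c_def by (simp add: power3_eq_cube)
  finally have I1: "integral {a..c} G \<le> (sl m)\<^sup>2 * h^3 / 24" .
  have "integral {c..b} G \<le> integral {c..b} (\<lambda>s. (sl m)\<^sup>2 * (s - b)\<^sup>2)"
  proof (rule integral_le)
    show "G integrable_on {c..b}" by (intro integrable_continuous_interval Gc)
    show "(\<lambda>s. (sl m)\<^sup>2 * (s - b)\<^sup>2) integrable_on {c..b}" by (intro integrable_continuous_interval continuous_intros)
    fix s show "G s \<le> (sl m)\<^sup>2 * (s - b)\<^sup>2"
      unfolding G_def C_def using grid_bound[OF m3 j, of "Suc i" k s] i bi by simp
  qed
  also have "\<dots> = (sl m)\<^sup>2 * (((b - b)^3 - (c - b)^3) / 3)"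
    using h0 unfolding c_def ba by (simp add: int_sq)
  also have "\<dots> = (sl m)\<^sup>2 * h^3 / 24" unfolding c_def ba by (simp add: power3_eq_cube)
  finally have I2: "integral {c..b} G \<le> (sl m)\<^sup>2 * h^3 / 24" .
  have "integral {a..c} G + integral {c..b} G = integral {a..b} G"
    using h0 unfolding c_def ba by (intro Henstock_Kurzweil_Integration.integral_combine integrable_continuous_interval Gc) auto
  then have "integral {a..b} G \<le> (sl m)\<^sup>2 * h^3 / 12" using I1 I2 by simp
  then show ?thesis unfolding a_def b_def h_def G_def C_def by simp
qed

lemma side_up:
  assumes m3: "m \<ge> 3" and j: "j < m"
  shows "integral {0..1} (\<lambda>s. qerr (alph m k \<union> poly_vertices m) (seg m j s)) \<le> (sl m)\<^sup>2 / (12 * (real (k+1))\<^sup>2)"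
proof -
  define C where "C = alph m k \<union> poly_vertices m"
  have Cf: "finite C" "C \<noteq> {}" unfolding C_def using alph_fin pv_fin vert_in(1)[OF m3 j] by auto
  have "integral {0..1} (\<lambda>s. qerr C (seg m j s)) = integral {0..real (k+1) * (1 / real (k+1))} (\<lambda>s. qerr C (seg m j s))"
    by simp
  also have "\<dots> = (\<Sum>i<k+1. integral {real i * (1 / real (k+1))..real (Suc i) * (1 / real (k+1))} (\<lambda>s. qerr C (seg m j s)))"
    by (rule sum_integral_h[OF qerr_seg_cont[OF Cf]]) simp
  also have "\<dots> \<le> (\<Sum>i<k+1. (sl m)\<^sup>2 * (1 / real (k+1))^3 / 12)"
    unfolding C_def by (intro sum_mono cell_up[OF m3 j]) auto
  also have "\<dots> = real (k+1) * ((sl m)\<^sup>2 * (1 / real (k+1))^3 / 12)" by simp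
  also have "\<dots> = (sl m)\<^sup>2 / (12 * (real (k+1))\<^sup>2)"
  proof -
    have "x * (a * (1 / x)^3 / 12) = a / (12 * x\<^sup>2)" if "x > 0" for x a :: real
      using that by (simp add: power3_eq_cube power2_eq_square field_simps)
    then show ?thesis by (metis of_nat_0_less_iff zero_less_Suc add.commute plus_1_eq_Suc)
  qed
  finally show ?thesis unfolding C_def .
qed

abbreviation "Vq m n \<equiv> cond_quant_error (poly_measure m) (poly_vertices m) n"

lemma integrand_eq: "(\<lambda>x. Min ((\<lambda>a. (norm (x - a))\<^sup>2) ` (\<alpha> \<union> \<beta>))) = qerr (\<alpha> \<union> \<beta>)"
  unfolding qerr_def by simp

lemma val_eq:
  assumes m3: "m \<ge> 3" and fa: "finite \<alpha>"
  shows "(\<integral>x. Min ((\<lambda>a. (norm (x - a))\<^sup>2) ` (\<alpha> \<union> poly_vertices m)) \<partial>poly_measure m)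
      = (\<Sum>j<m. integral {0..1} (\<lambda>s. qerr (\<alpha> \<union> poly_vertices m) (seg m j s))) / real m"
proof -
  have f: "finite (\<alpha> \<union> poly_vertices m)" using fa pv_fin by simp
  have ne: "\<alpha> \<union> poly_vertices m \<noteq> {}" using vert_in(1)[OF m3, of 0] m3 by auto
  show ?thesis unfolding integrand_eq
    using m3 by (intro poly_integral qerr_cont[OF f ne]) auto
qed

lemma side_nonneg:
  assumes m3: "m \<ge> 3" and fa: "finite \<alpha>"
  shows "0 \<le> integral {0..1} (\<lambda>s. qerr (\<alpha> \<union> poly_vertices m) (seg m j s))"
proof -
  have f: "finite (\<alpha> \<union> poly_vertices m)" using fa pv_fin by simp
  have ne: "\<alpha> \<union> poly_vertices m \<noteq> {}" using vert_in(1)[OF m3, of 0] m3 by auto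
  show ?thesis
    by (intro Henstock_Kurzweil_Integration.integral_nonneg integrable_continuous_interval qerr_seg_cont[OF f ne])
       (auto intro: qerr_nonneg[OF f ne])
qed

lemma val_nonneg:
  assumes m3: "m \<ge> 3" and fa: "finite \<alpha>"
  shows "0 \<le> (\<integral>x. Min ((\<lambda>a. (norm (x - a))\<^sup>2) ` (\<alpha> \<union> poly_vertices m)) \<partial>poly_measure m)"
  unfolding val_eq[OF assms] using side_nonneg[OF assms] by (intro divide_nonneg_nonneg sum_nonneg) auto

lemma V_le:
  assumes m3: "m \<ge> 3" and fa: "finite \<alpha>" and ca: "card \<alpha> \<le> n - card (poly_vertices m)"
  shows "Vq m n \<le> (\<integral>x. Min ((\<lambda>a. (norm (x - a))\<^sup>2) ` (\<alpha> \<union> poly_vertices m)) \<partial>poly_measure m)"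
  unfolding cond_quant_error_def
proof (rule cInf_lower)
  show "(\<integral>x. Min ((\<lambda>a. (norm (x - a))\<^sup>2) ` (\<alpha> \<union> poly_vertices m)) \<partial>poly_measure m)
    \<in> {\<integral>x. Min ((\<lambda>a. (norm (x - a))\<^sup>2) ` (\<alpha> \<union> poly_vertices m)) \<partial>poly_measure m |\<alpha>.
        finite \<alpha> \<and> card \<alpha> \<le> n - card (poly_vertices m)}" using fa ca by blast
  show "bdd_below {\<integral>x. Min ((\<lambda>a. (norm (x - a))\<^sup>2) ` (\<alpha> \<union> poly_vertices m)) \<partial>poly_measure m |\<alpha>.
        finite \<alpha> \<and> card \<alpha> \<le> n - card (poly_vertices m)}"
    unfolding bdd_below_def using val_nonneg[OF m3] by blast
qed

lemma V_ge:
  assumes m3: "m \<ge> 3"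
    and b: "\<And>\<alpha>. finite \<alpha> \<Longrightarrow> card \<alpha> \<le> n - card (poly_vertices m) \<Longrightarrow>
       b \<le> (\<integral>x. Min ((\<lambda>a. (norm (x - a))\<^sup>2) ` (\<alpha> \<union> poly_vertices m)) \<partial>poly_measure m)"
  shows "b \<le> Vq m n"
  unfolding cond_quant_error_def
proof (rule cInf_greatest)
  show "{\<integral>x. Min ((\<lambda>a. (norm (x - a))\<^sup>2) ` (\<alpha> \<union> poly_vertices m)) \<partial>poly_measure m |\<alpha>.
        finite \<alpha> \<and> card \<alpha> \<le> n - card (poly_vertices m)} \<noteq> {}"
  proof -
    have "(\<integral>x. Min ((\<lambda>a. (norm (x - a))\<^sup>2) ` ({} \<union> poly_vertices m)) \<partial>poly_measure m) \<in> {\<integral>x. Min ((\<lambda>a. (norm (x - a))\<^sup>2) ` (\<alpha> \<union> poly_vertices m)) \<partial>poly_measure m |\<alpha>.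
        finite \<alpha> \<and> card \<alpha> \<le> n - card (poly_vertices m)}"
      by (rule CollectI, rule exI[of _ "{}"]) simp
    then show ?thesis by blast
  qed
qed (use b in blast)


lemma V_upper:
  assumes m3: "m \<ge> 3" and n: "n > m"
  shows "Vq m n \<le> (sl m)\<^sup>2 * (real m)\<^sup>2 / (12 * (real n - real m)\<^sup>2)"
proof -
  define k where "k = (n - m) div m"
  have "card (alph m k) \<le> m * k" by (rule alph_card)
  also have "m * k \<le> n - m" unfolding k_def by (rule times_div_less_eq_dividend)
  also have "n - m \<le> n - card (poly_vertices m)" using pv_card[of m] by (rule diff_le_mono2)
  finally have ca: "card (alph m k) \<le> n - card (poly_vertices m)" .
  have "Vq m n \<le> (\<integral>x. Min ((\<lambda>a. (norm (x - a))\<^sup>2) ` (alph m k \<union> poly_vertices m)) \<partial>poly_measure m)"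
    by (rule V_le[OF m3 alph_fin ca])
  also have "\<dots> = (\<Sum>j<m. integral {0..1} (\<lambda>s. qerr (alph m k \<union> poly_vertices m) (seg m j s))) / real m"
    by (rule val_eq[OF m3 alph_fin])
  also have "\<dots> \<le> (\<Sum>j<m. (sl m)\<^sup>2 / (12 * (real (k+1))\<^sup>2)) / real m"
    by (intro divide_right_mono sum_mono side_up[OF m3]) auto
  also have "\<dots> = (sl m)\<^sup>2 / (12 * (real (k+1))\<^sup>2)" using m3 by simp
  also have "\<dots> \<le> (sl m)\<^sup>2 * (real m)\<^sup>2 / (12 * (real n - real m)\<^sup>2)"
  proof -
    have "n - m = m * k + (n - m) mod m" unfolding k_def by simp
    moreover have "(n - m) mod m < m" using m3 by simp
    moreover have "m * (k + 1) = m * k + m" by simp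
    ultimately have "n - m < m * (k + 1)" by linarith
    then have lt: "real n - real m < real m * real (k + 1)"
      using n by (metis of_nat_diff of_nat_less_iff of_nat_mult less_imp_le)
    have pos: "0 < real n - real m" using n by simp
    have "(real n - real m)\<^sup>2 \<le> (real m * real (k+1))\<^sup>2" using lt pos by (intro power_mono) auto
    then have "(real n - real m)\<^sup>2 / (real m)\<^sup>2 \<le> (real (k+1))\<^sup>2"
      using m3 by (simp add: divide_le_eq power_mult_distrib mult.commute)
    then have "1 / (real (k+1))\<^sup>2 \<le> 1 / ((real n - real m)\<^sup>2 / (real m)\<^sup>2)"
      using pos m3 by (intro divide_left_mono mult_pos_pos) auto
    then have "(sl m)\<^sup>2 / 12 * (1 / (real (k+1))\<^sup>2) \<le> (sl m)\<^sup>2 / 12 * (1 / ((real n - real m)\<^sup>2 / (real m)\<^sup>2))"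
      by (intro mult_left_mono) auto
    then show ?thesis by (simp add: field_simps)
  qed
  finally show ?thesis .
qed

definition epsn :: "nat \<Rightarrow> nat \<Rightarrow> real" where
  "epsn m n = root 3 (8 * sl m * real m / real n)"

definition cfun :: "nat \<Rightarrow> real \<Rightarrow> real" where
  "cfun m e = (sl m)\<^sup>2 / (12 * real m) * (real m - 8 * real m * e / Dc m)^3"

lemma V_lower:
  assumes m3: "m \<ge> 3" and n: "n \<ge> m"
  shows "min (real n) (cfun m (epsn m n)) \<le> (real n)\<^sup>2 * Vq m n"
proof -
  have n0: "real n > 0" using m3 n by simp
  have "min (real n) (cfun m (epsn m n)) / (real n)\<^sup>2 \<le> Vq m n"
  proof (rule V_ge[OF m3])
    fix \<alpha> :: "(real^2) set" assume fa: "finite \<alpha>" and ca: "card \<alpha> \<le> n - card (poly_vertices m)"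
    define C where "C = \<alpha> \<union> poly_vertices m"
    define N where "N = card C"
    have fC: "finite C" unfolding C_def using fa pv_fin by simp
    have NC: "N \<le> n"
    proof -
      have "N \<le> card \<alpha> + card (poly_vertices m)" unfolding N_def C_def by (rule card_Un_le)
      also have "\<dots> \<le> n" using ca pv_card[of m] n by linarith
      finally show ?thesis .
    qed
    obtain f where f: "bij_betw f {0..<N} C" using ex_bij_betw_nat_finite[OF fC] unfolding N_def by blast
    interpret cfg m C f N
      by unfold_locales (use m3 fC f in \<open>auto simp: C_def atLeast0LessThan\<close>)
    define T where "T = (\<Sum>j<m. integral {0..1} (\<lambda>s. qerr C (seg m j s)))"
    have val: "(\<integral>x. Min ((\<lambda>a. (norm (x - a))\<^sup>2) ` (\<alpha> \<union> poly_vertices m)) \<partial>poly_measure m) = T / real m"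
      unfolding T_def C_def by (rule val_eq[OF m3 fa])
    have sn: "0 \<le> integral {0..1} (\<lambda>s. qerr C (seg m j s))" for j
      unfolding C_def by (rule side_nonneg[OF m3 fa])
    have T0: "T \<ge> 0" unfolding T_def using sn by (intro sum_nonneg) auto
    have "min (real n) (cfun m (epsn m n)) / (real n)\<^sup>2 \<le> T / real m"
    proof (cases "T / real m \<ge> 1 / real n")
      case True
      have "min (real n) (cfun m (epsn m n)) / (real n)\<^sup>2 \<le> real n / (real n)\<^sup>2"
        using n0 by (intro divide_right_mono) auto
      also have "\<dots> = 1 / real n" using n0 by (simp add: power2_eq_square)
      finally show ?thesis using True by linarith
    next
      case False
      then have Tlt: "T < real m / real n" using m3 n0 by (simp add: field_simps)
      define \<epsilon> where "\<epsilon> = epsn m n"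
      have L: "sl m > 0" using sl_pos m3 by simp
      have arg0: "0 \<le> 8 * sl m * real m / real n" using L n0 by simp
      have e0: "\<epsilon> \<ge> 0" unfolding \<epsilon>_def epsn_def using arg0 by simp
      have e3: "\<epsilon>^3 = 8 * sl m * real m / real n" unfolding \<epsilon>_def epsn_def using arg0 by (simp add: real_root_pow_pos2)
      have eps: "\<forall>j<m. \<forall>s\<in>{0..1}. sqrt (qerr C (seg m j s)) \<le> \<epsilon>"
      proof (intro allI impI ballI)
        fix j :: nat and s :: real assume j: "j < m" and s: "s \<in> {0..1}"
        have "(sqrt (qerr C (seg m j s)))^3 \<le> 8 * sl m * integral {0..1} (\<lambda>s. qerr C (seg m j s))"
          using apriori[OF m3 fC _ j] s unfolding C_def by auto
        also have "\<dots> \<le> 8 * sl m * T"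
          unfolding T_def using L j sn by (intro mult_left_mono member_le_sum) auto
        also have "\<dots> \<le> 8 * sl m * (real m / real n)" using Tlt L by (intro mult_left_mono) auto
        also have "\<dots> = \<epsilon>^3" unfolding e3 by simp
        finally have "(sqrt (qerr C (seg m j s)))^Suc 2 \<le> \<epsilon>^Suc 2" by (simp add: numeral_3_eq_3)
        then show "sqrt (qerr C (seg m j s)) \<le> \<epsilon>" using e0 by (rule power_le_imp_le_base)
      qed
      have low: "(sl m)\<^sup>2 / 12 * (real m - 8 * real m * \<epsilon> / Dc m)^3 \<le> (real N)\<^sup>2 * T"
        unfolding T_def by (rule lower[OF eps e0])
      also have "\<dots> \<le> (real n)\<^sup>2 * T" using NC T0 by (intro mult_right_mono power_mono) auto
      finally have "cfun m \<epsilon> \<le> (real n)\<^sup>2 * T / real m"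
        unfolding cfun_def using m3 by (simp add: field_simps)
      then have "min (real n) (cfun m \<epsilon>) \<le> (real n)\<^sup>2 * (T / real m)" by simp
      then show ?thesis unfolding \<epsilon>_def using n0 by (simp add: field_simps)
    qed
    then show "min (real n) (cfun m (epsn m n)) / (real n)\<^sup>2
        \<le> (\<integral>x. Min ((\<lambda>a. (norm (x - a))\<^sup>2) ` (\<alpha> \<union> poly_vertices m)) \<partial>poly_measure m)"
      unfolding val .
  qed
  then show ?thesis using n0 by (simp add: field_simps)
qed


lemma V_nonneg: assumes m3: "m \<ge> 3" shows "0 \<le> Vq m n"
  by (rule V_ge[OF m3]) (rule val_nonneg[OF m3])

theorem theorem5p6:
  fixes m :: nat
  assumes "m \<ge> 3"
  shows "convergent (\<lambda>n. cond_quant_error (poly_measure m) (poly_vertices m) n)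
    \<and> (\<lambda>n. (real n)\<^sup>2 * (cond_quant_error (poly_measure m) (poly_vertices m) n
              - lim (\<lambda>k. cond_quant_error (poly_measure m) (poly_vertices m) k)))
      \<longlonglongrightarrow> (1 / 3) * (real m)\<^sup>2 * (sin (pi / real m))\<^sup>2"
proof -
  have m3: "m \<ge> 3" by (rule assms)
  define L where "L = sl m"
  define K where "K = L\<^sup>2 * (real m)\<^sup>2 / 12"
  have Kval: "K = (1 / 3) * (real m)\<^sup>2 * (sin (pi / real m))\<^sup>2"
    unfolding K_def L_def sl_def by (simp add: power_mult_distrib)
  have D: "Dc m > 0" by (rule Dc_pos[OF m3])
  have up: "eventually (\<lambda>n. Vq m n \<le> L\<^sup>2 * (real m)\<^sup>2 / (12 * (real n - real m)\<^sup>2)) sequentially"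
    unfolding L_def using eventually_gt_at_top[of m] by eventually_elim (rule V_upper[OF m3])
  have w0: "(\<lambda>n. L\<^sup>2 * (real m)\<^sup>2 / (12 * (real n - real m)\<^sup>2)) \<longlonglongrightarrow> 0"
    by real_asymp
  have V0: "(\<lambda>n. Vq m n) \<longlonglongrightarrow> 0"
    by (rule tendsto_sandwich[OF _ up tendsto_const w0]) (simp add: V_nonneg[OF m3])
  have limV: "lim (\<lambda>k. Vq m k) = 0" using V0 by (rule limI)
  have conv: "convergent (\<lambda>n. Vq m n)" using V0 by (rule convergentI)
  have upper2: "eventually (\<lambda>n. (real n)\<^sup>2 * Vq m n \<le> (real n)\<^sup>2 * (L\<^sup>2 * (real m)\<^sup>2 / (12 * (real n - real m)\<^sup>2))) sequentially"
    using up by eventually_elim (intro mult_left_mono, auto)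
  have wK: "(\<lambda>n. (real n)\<^sup>2 * (L\<^sup>2 * (real m)\<^sup>2 / (12 * (real n - real m)\<^sup>2))) \<longlonglongrightarrow> K"
    unfolding K_def by real_asymp
  have lower2: "eventually (\<lambda>n. min (real n) (cfun m (epsn m n)) \<le> (real n)\<^sup>2 * Vq m n) sequentially"
    using eventually_ge_at_top[of m] by eventually_elim (rule V_lower[OF m3])
  have e0: "(\<lambda>n. epsn m n) \<longlonglongrightarrow> 0"
  proof -
    have "(\<lambda>n. 8 * sl m * real m / real n) \<longlonglongrightarrow> 0" by real_asymp
    then have "(\<lambda>n. root 3 (8 * sl m * real m / real n)) \<longlonglongrightarrow> root 3 0" by (rule tendsto_real_root)
    then show ?thesis unfolding epsn_def by simp
  qed
  have cK: "(\<lambda>n. cfun m (epsn m n)) \<longlonglongrightarrow> K"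
  proof -
    have "(\<lambda>n. (sl m)\<^sup>2 / (12 * real m) * (real m - 8 * real m * epsn m n / Dc m)^3)
        \<longlonglongrightarrow> (sl m)\<^sup>2 / (12 * real m) * (real m - 8 * real m * 0 / Dc m)^3"
      using D by (intro tendsto_intros e0) auto
    moreover have "(sl m)\<^sup>2 / (12 * real m) * (real m - 8 * real m * 0 / Dc m)^3 = K"
      unfolding K_def L_def using m3 by (simp add: power3_eq_cube power2_eq_square field_simps)
    ultimately show ?thesis unfolding cfun_def by simp
  qed
  have cle: "cfun m (epsn m n) \<le> K" for n
  proof -
    have ep: "epsn m n \<ge> 0" unfolding epsn_def using sl_pos[of m] m3 by simp
    have "real m - 8 * real m * epsn m n / Dc m \<le> real m" using ep D by simp
    then have "(real m - 8 * real m * epsn m n / Dc m)^3 \<le> (real m)^3" by (intro power_mono_odd) auto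
    then have "(sl m)\<^sup>2 / (12 * real m) * (real m - 8 * real m * epsn m n / Dc m)^3 \<le> (sl m)\<^sup>2 / (12 * real m) * (real m)^3"
      by (intro mult_left_mono) auto
    also have "\<dots> = K" unfolding K_def L_def using m3 by (simp add: power3_eq_cube power2_eq_square field_simps)
    finally show ?thesis unfolding cfun_def .
  qed
  have gK: "(\<lambda>n. min (real n) (cfun m (epsn m n))) \<longlonglongrightarrow> K"
  proof -
    have "eventually (\<lambda>n. cfun m (epsn m n) = min (real n) (cfun m (epsn m n))) sequentially"
    proof -
      obtain N0 :: nat where KN: "K \<le> real N0" using real_arch_simple by blast
      have "eventually (\<lambda>n. N0 \<le> n) sequentially" by (rule eventually_ge_at_top)
      then have "eventually (\<lambda>n. K \<le> real n) sequentially"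
        by eventually_elim (use KN in \<open>meson of_nat_le_iff order_trans\<close>)
      then show ?thesis
      proof eventually_elim
        fix n assume "K \<le> real n"
        then have "cfun m (epsn m n) \<le> real n" using cle[of n] by linarith
        then show "cfun m (epsn m n) = min (real n) (cfun m (epsn m n))" by simp
      qed
    qed
    then show ?thesis by (rule Lim_transform_eventually[OF cK])
  qed
  have main: "(\<lambda>n. (real n)\<^sup>2 * Vq m n) \<longlonglongrightarrow> K"
    by (rule tendsto_sandwich[OF lower2 upper2 gK wK])
  show ?thesis using conv main unfolding limV Kval by simp
qed

end
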